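(* Let $M$ be a Banach manifold, $K\in C^\infty(M\times M,\mathbb C)$ a smooth positive definite kernel with reproducing kernel Hilbert space $\mathcal H_K\subseteq C^\infty(M,\mathbb C)$, and $V$ a $K$-symmetric vector field on $M$ with local flow $\phi^V_t$. Then for every $m\in M$, \[\mathcal L_VK_m=\frac{d}{dt}\Big|_{t=0}K_{\phi^V_t m}\in\mathcal H_K\] (derivative in $\mathcal H_K$). In particular $\mathcal H_K^0\subseteq\mathcal D_V$ and $\mathcal L_V|_{\mathcal H_K^0}$ is symmetric. Moreover, for every $\varphi\in\mathcal H_K$ and $m\in M$, $\langle\varphi,\mathcal L_VK_m\rangle=(\mathcal L_V\varphi)(m)$.
   Context: $\mathcal H_K$ is the Hilbert space of functions on $M$ with $f(m)=\langle f,K_m\rangle$, where $K_m(x)=K(x,m)$ and the inner product is linear in the first argument; $\mathcal H_K^0$ is the span of $\{K_m:m\in M\}$. For a vector field $V$, $(\mathcal L_V\varphi)(m)=\frac{d}{dt}|_{t=0}\varphi(\phi^V_t m)$, and $\mathcal D_V:=\{\varphi\in\mathcal H_K:\mathcal L_V\varphi\in\mathcal H_K\}$. $V$ is $K$-symmetric if $(\mathcal L_VK_m)(n)=\overline{(\mathcal L_VK_n)(m)}$ for all $m,n\in M$. *)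

theory Defs
  imports "HOL-Analysis.Analysis"
begin

text \<open>The k-th derivative at a point is represented as a bounded k-multilinear map,
encoded as a function on lists of length k of directions.\<close>

definition mlnorm :: "nat \<Rightarrow> ('a::real_normed_vector list \<Rightarrow> 'b::real_normed_vector) \<Rightarrow> real" where
  "mlnorm k A = (SUP vs \<in> {vs. length vs = k \<and> (\<forall>v\<in>set vs. norm v \<le> 1)}. norm (A vs))"

definition bounded_multilinear_k :: "nat \<Rightarrow> ('a::real_normed_vector list \<Rightarrow> 'b::real_normed_vector) \<Rightarrow> bool" where
  "bounded_multilinear_k k A \<longleftrightarrow>
     (\<forall>vs i. length vs = k \<and> i < k \<longrightarrow> linear (\<lambda>h. A (vs[i := h]))) \<and>
     (\<exists>C. \<forall>vs. length vs = k \<longrightarrow> norm (A vs) \<le> C * prod_list (map norm vs))"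

definition smooth_on :: "'a::real_normed_vector set \<Rightarrow> ('a \<Rightarrow> 'b::real_normed_vector) \<Rightarrow> bool" where
  "smooth_on S f \<longleftrightarrow> open S \<and>
     (\<exists>F :: nat \<Rightarrow> 'a \<Rightarrow> 'a list \<Rightarrow> 'b.
        (\<forall>x\<in>S. F 0 x [] = f x) \<and>
        (\<forall>k. \<forall>x\<in>S. bounded_multilinear_k k (F k x) \<and>
           ((\<lambda>y. mlnorm k (\<lambda>vs. F k y vs - F k x vs - F (Suc k) x ((y - x) # vs)) / norm (y - x))
               \<longlongrightarrow> 0) (at x) \<and>
           ((\<lambda>y. mlnorm (Suc k) (\<lambda>vs. F (Suc k) y vs - F (Suc k) x vs)) \<longlongrightarrow> 0) (at x)))"

section \<open>Banach manifolds (the manifold is the whole type 'm with its topology)\<close>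

type_synonym ('m, 'e) chart = "'m set \<times> ('m \<Rightarrow> 'e)"

definition banach_manifold :: "('m::topological_space, 'e::banach) chart set \<Rightarrow> bool" where
  "banach_manifold A \<longleftrightarrow>
     (\<forall>(U,\<psi>)\<in>A. open U \<and> open (\<psi> ` U) \<and> (\<exists>g. homeomorphism U (\<psi> ` U) \<psi> g)) \<and>
     \<Union>(fst ` A) = UNIV \<and>
     (\<forall>(U,\<psi>)\<in>A. \<forall>(V,\<rho>)\<in>A. smooth_on (\<psi> ` (U \<inter> V)) (\<rho> \<circ> inv_into U \<psi>))"

definition smooth_fun :: "('m, 'e::real_normed_vector) chart set \<Rightarrow> ('m \<Rightarrow> 'b::real_normed_vector) \<Rightarrow> bool" where
  "smooth_fun A f \<longleftrightarrow> (\<forall>(U,\<psi>)\<in>A. smooth_on (\<psi> ` U) (f \<circ> inv_into U \<psi>))"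

definition smooth_kernel :: "('m, 'e::real_normed_vector) chart set \<Rightarrow> ('m \<Rightarrow> 'm \<Rightarrow> 'b::real_normed_vector) \<Rightarrow> bool" where
  "smooth_kernel A K \<longleftrightarrow> (\<forall>(U,\<psi>)\<in>A. \<forall>(V,\<rho>)\<in>A.
      smooth_on (\<psi> ` U \<times> \<rho> ` V) (\<lambda>(x,y). K (inv_into U \<psi> x) (inv_into V \<rho> y)))"

text \<open>A smooth vector field, given by its local representatives v c in each chart c,
compatible under the derivatives of the transition maps.\<close>
definition vector_field :: "('m, 'e::real_normed_vector) chart set \<Rightarrow> (('m, 'e) chart \<Rightarrow> 'e \<Rightarrow> 'e) \<Rightarrow> bool" where
  "vector_field A v \<longleftrightarrow>
     (\<forall>(U,\<psi>)\<in>A. smooth_on (\<psi> ` U) (v (U,\<psi>))) \<and>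
     (\<forall>(U,\<psi>)\<in>A. \<forall>(V,\<rho>)\<in>A. \<forall>x\<in>U \<inter> V. \<forall>D.
        ((\<rho> \<circ> inv_into U \<psi>) has_derivative D) (at (\<psi> x)) \<longrightarrow> D (v (U,\<psi>) (\<psi> x)) = v (V,\<rho>) (\<rho> x))"

definition local_flow :: "('m::topological_space, 'e::real_normed_vector) chart set \<Rightarrow> (('m, 'e) chart \<Rightarrow> 'e \<Rightarrow> 'e)
     \<Rightarrow> (real \<Rightarrow> 'm \<Rightarrow> 'm) \<Rightarrow> bool" where
  "local_flow A v \<phi> \<longleftrightarrow> (\<forall>m. \<phi> 0 m = m \<and>
     (\<exists>\<epsilon>>0. continuous_on {-\<epsilon><..<\<epsilon>} (\<lambda>t. \<phi> t m) \<and>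
        (\<forall>t\<in>{-\<epsilon><..<\<epsilon>}. \<forall>(U,\<psi>)\<in>A. \<phi> t m \<in> U \<longrightarrow>
           ((\<lambda>s. \<psi> (\<phi> s m)) has_vector_derivative v (U,\<psi>) (\<psi> (\<phi> t m))) (at t))))"

definition lie :: "(real \<Rightarrow> 'm \<Rightarrow> 'm) \<Rightarrow> ('m \<Rightarrow> complex) \<Rightarrow> ('m \<Rightarrow> complex)" where
  "lie \<phi> f = (\<lambda>m. vector_derivative (\<lambda>t. f (\<phi> t m)) (at (0::real)))"

definition K_symmetric :: "(real \<Rightarrow> 'm \<Rightarrow> 'm) \<Rightarrow> ('m \<Rightarrow> 'm \<Rightarrow> complex) \<Rightarrow> bool" where
  "K_symmetric \<phi> K \<longleftrightarrow> (\<forall>m n. lie \<phi> (\<lambda>x. K x m) n = cnj (lie \<phi> (\<lambda>x. K x n) m))"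

definition pos_def_kernel :: "('m \<Rightarrow> 'm \<Rightarrow> complex) \<Rightarrow> bool" where
  "pos_def_kernel K \<longleftrightarrow> (\<forall>(n::nat) (c::nat \<Rightarrow> complex) (ms::nat \<Rightarrow> 'm).
      Im (\<Sum>i<n. \<Sum>j<n. cnj (c i) * c j * K (ms i) (ms j)) = 0 \<and>
      Re (\<Sum>i<n. \<Sum>j<n. cnj (c i) * c j * K (ms i) (ms j)) \<ge> 0)"

definition hnorm :: "(('m \<Rightarrow> complex) \<Rightarrow> ('m \<Rightarrow> complex) \<Rightarrow> complex) \<Rightarrow> ('m \<Rightarrow> complex) \<Rightarrow> real" where
  "hnorm ip f = sqrt (Re (ip f f))"

text \<open>(H, ip) is a complex Hilbert space of functions M -> C (inner product linear in the
first argument) with reproducing kernel K: K_m = (\<lambda>x. K x m) \<in> H and f m = ip f K_m.\<close>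
definition rkhs :: "('m \<Rightarrow> 'm \<Rightarrow> complex) \<Rightarrow> ('m \<Rightarrow> complex) set
     \<Rightarrow> (('m \<Rightarrow> complex) \<Rightarrow> ('m \<Rightarrow> complex) \<Rightarrow> complex) \<Rightarrow> bool" where
  "rkhs K H ip \<longleftrightarrow>
     (\<lambda>x. 0) \<in> H \<and>
     (\<forall>f\<in>H. \<forall>g\<in>H. (\<lambda>x. f x + g x) \<in> H) \<and>
     (\<forall>c. \<forall>f\<in>H. (\<lambda>x. c * f x) \<in> H) \<and>
     (\<forall>f\<in>H. \<forall>g\<in>H. \<forall>h\<in>H. ip (\<lambda>x. f x + g x) h = ip f h + ip g h) \<and>
     (\<forall>c. \<forall>f\<in>H. \<forall>g\<in>H. ip (\<lambda>x. c * f x) g = c * ip f g) \<and>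
     (\<forall>f\<in>H. \<forall>g\<in>H. ip g f = cnj (ip f g)) \<and>
     (\<forall>f\<in>H. Re (ip f f) \<ge> 0 \<and> (ip f f = 0 \<longrightarrow> f = (\<lambda>x. 0))) \<and>
     (\<forall>X. (\<forall>n. X n \<in> H) \<and>
          (\<forall>e>0. \<exists>N. \<forall>m\<ge>N. \<forall>n\<ge>N. hnorm ip (\<lambda>x. X m x - X n x) < e) \<longrightarrow>
          (\<exists>f\<in>H. (\<lambda>n. hnorm ip (\<lambda>x. X n x - f x)) \<longlonglongrightarrow> 0)) \<and>
     (\<forall>m. (\<lambda>x. K x m) \<in> H) \<and>
     (\<forall>f\<in>H. \<forall>m. f m = ip f (\<lambda>x. K x m))"

text \<open>H_K^0: the linear span of the kernel functions K_m.\<close>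
definition kspan :: "('m \<Rightarrow> 'm \<Rightarrow> complex) \<Rightarrow> ('m \<Rightarrow> complex) set" where
  "kspan K = {f. \<exists>(n::nat) (c::nat \<Rightarrow> complex) (ms::nat \<Rightarrow> 'm). f = (\<lambda>x. \<Sum>j<n. c j * K x (ms j))}"

text \<open>D_V = {f in H. L_V f in H}.\<close>
definition lie_domain :: "('m \<Rightarrow> complex) set \<Rightarrow> (real \<Rightarrow> 'm \<Rightarrow> 'm) \<Rightarrow> ('m \<Rightarrow> complex) set" where
  "lie_domain H \<phi> = {f\<in>H. lie \<phi> f \<in> H}"

definition H_has_derivative_at0 :: "(('m \<Rightarrow> complex) \<Rightarrow> ('m \<Rightarrow> complex) \<Rightarrow> complex)
     \<Rightarrow> (real \<Rightarrow> 'm \<Rightarrow> complex) \<Rightarrow> ('m \<Rightarrow> complex) \<Rightarrow> bool" where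
  "H_has_derivative_at0 ip \<gamma> D \<longleftrightarrow>
     ((\<lambda>t. hnorm ip (\<lambda>x. (\<gamma> t x - \<gamma> 0 x) / complex_of_real t - D x)) \<longlongrightarrow> 0) (at (0::real))"

end

theory Submission
  imports Defs
begin

lemma len1: "length vs = Suc 0 \<Longrightarrow> \<exists>w. vs = [w]"
  by (cases vs) auto
lemma len2: "length vs = Suc (Suc 0) \<Longrightarrow> \<exists>a b. vs = [a,b]"
  by (cases vs; cases "tl vs") auto

lemma ml_le:
  assumes B: "\<And>vs. length vs = k \<Longrightarrow> (\<forall>v\<in>set vs. norm v \<le> 1) \<Longrightarrow> norm (A vs) \<le> B"
    and "length vs = k" "\<forall>v\<in>set vs. norm v \<le> 1"
  shows "norm (A vs) \<le> mlnorm k A"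
  unfolding mlnorm_def
proof (rule cSUP_upper)
  show "vs \<in> {vs. length vs = k \<and> (\<forall>v\<in>set vs. norm v \<le> 1)}" using assms by blast
  show "bdd_above ((\<lambda>vs. norm (A vs)) ` {vs. length vs = k \<and> (\<forall>v\<in>set vs. norm v \<le> 1)})"
    by (rule bdd_aboveI2[where M=B]) (use B in blast)
qed

lemma ml0: "mlnorm 0 A = norm (A [])"
proof -
  have eq: "{vs. length vs = 0 \<and> (\<forall>v\<in>set vs. norm v \<le> 1)} = {[]}" by auto
  show ?thesis unfolding mlnorm_def eq by simp
qed

lemma ml1:
  fixes A :: "'a::real_normed_vector list \<Rightarrow> 'b::real_normed_vector"
  assumes lin: "linear (\<lambda>h. A [h])" and B: "\<And>w. norm w \<le> 1 \<Longrightarrow> norm (A [w]) \<le> B"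
  shows "norm (A [w]) \<le> mlnorm 1 A * norm w"
proof (cases "w = 0")
  case True then show ?thesis using linear_0[OF lin] by simp
next
  case False
  define w' where "w' = w /\<^sub>R norm w"
  have nw: "norm w' \<le> 1" using False by (simp add: w'_def)
  have "A [w] = norm w *\<^sub>R A [w']"
    using linear_scale[OF lin, of "norm w" w'] False by (simp add: w'_def)
  moreover have "norm (A [w']) \<le> mlnorm 1 A"
    apply (rule ml_le[where B=B])
    using nw by (auto dest!: len1 intro: B)
  ultimately show ?thesis by (simp add: mult.commute mult_left_mono)
qed

lemma ml2:
  fixes A :: "'a::real_normed_vector list \<Rightarrow> 'b::real_normed_vector"
  assumes lin1: "\<And>b. linear (\<lambda>h. A [h,b])" and lin2: "\<And>a. linear (\<lambda>h. A [a,h])"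
    and B: "\<And>a b. norm a \<le> 1 \<Longrightarrow> norm b \<le> 1 \<Longrightarrow> norm (A [a,b]) \<le> B"
  shows "norm (A [a,b]) \<le> mlnorm 2 A * norm a * norm b"
proof (cases "a = 0 \<or> b = 0")
  case True then show ?thesis using linear_0[OF lin1[of b]] linear_0[OF lin2[of a]] by auto
next
  case False
  define a' where "a' = a /\<^sub>R norm a"
  define b' where "b' = b /\<^sub>R norm b"
  have na: "norm a' \<le> 1" "norm b' \<le> 1" using False by (auto simp: a'_def b'_def)
  have "A [a,b] = norm a *\<^sub>R A [a', b]"
    using linear_scale[OF lin1[of b], of "norm a" a'] False by (simp add: a'_def)
  also have "A [a', b] = norm b *\<^sub>R A [a',b']"
    using linear_scale[OF lin2[of a'], of "norm b" b'] False by (simp add: b'_def)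
  finally have eq: "A [a,b] = (norm a * norm b) *\<^sub>R A [a',b']" by simp
  have "norm (A [a',b']) \<le> mlnorm 2 A"
    apply (rule ml_le[where B=B])
    using na by (auto simp: numeral_2_eq_2 dest!: len2 intro: B)
  then have "(norm a * norm b) * norm (A[a',b']) \<le> (norm a * norm b) * mlnorm 2 A"
    by (simp add: mult_left_mono)
  then show ?thesis unfolding eq by (simp add: ac_simps)
qed

lemma bml1:
  assumes "bounded_multilinear_k 1 A"
  shows "linear (\<lambda>h. A [h])" "\<exists>C\<ge>0. \<forall>w. norm (A [w]) \<le> C * norm w"
proof -
  have "linear (\<lambda>h. A ([0][0 := h]))" using assms unfolding bounded_multilinear_k_def
    by (metis One_nat_def length_Cons list.size(3) zero_less_one)
  then show "linear (\<lambda>h. A [h])" by simp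
  obtain C where C: "\<And>vs. length vs = 1 \<Longrightarrow> norm (A vs) \<le> C * prod_list (map norm vs)"
    using assms unfolding bounded_multilinear_k_def by blast
  show "\<exists>C\<ge>0. \<forall>w. norm (A [w]) \<le> C * norm w"
  proof (intro exI[of _ "\<bar>C\<bar>"] conjI allI)
    fix w
    have "norm (A [w]) \<le> C * norm w" using C[of "[w]"] by simp
    also have "\<dots> \<le> \<bar>C\<bar> * norm w" by (simp add: mult_right_mono)
    finally show "norm (A [w]) \<le> \<bar>C\<bar> * norm w" .
  qed simp
qed

lemma bml2:
  assumes "bounded_multilinear_k 2 A"
  shows "\<And>b. linear (\<lambda>h. A [h,b])" "\<And>a. linear (\<lambda>h. A [a,h])"
    "\<exists>C\<ge>0. \<forall>a b. norm (A [a,b]) \<le> C * norm a * norm b"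
proof -
  have L: "\<And>vs i. length vs = 2 \<Longrightarrow> i < 2 \<Longrightarrow> linear (\<lambda>h. A (vs[i := h]))"
    using assms unfolding bounded_multilinear_k_def by blast
  show "\<And>b. linear (\<lambda>h. A [h,b])" using L[of "[0,b]" 0 for b] by simp
  show "\<And>a. linear (\<lambda>h. A [a,h])" using L[of "[a,0]" 1 for a] by simp
  obtain C where C: "\<And>vs. length vs = 2 \<Longrightarrow> norm (A vs) \<le> C * prod_list (map norm vs)"
    using assms unfolding bounded_multilinear_k_def by blast
  show "\<exists>C\<ge>0. \<forall>a b. norm (A [a,b]) \<le> C * norm a * norm b"
  proof (intro exI[of _ "\<bar>C\<bar>"] conjI allI)
    fix a b
    have "norm (A [a,b]) \<le> C * (norm a * norm b)" using C[of "[a,b]"] by simp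
    also have "\<dots> \<le> \<bar>C\<bar> * (norm a * norm b)" by (simp add: mult_right_mono)
    finally show "norm (A [a,b]) \<le> \<bar>C\<bar> * norm a * norm b" by (simp add: mult.assoc)
  qed simp
qed

lemma deriv_from_quot:
  assumes bl: "bounded_linear f'"
    and T: "((\<lambda>y. norm (f y - f x - f' (y - x)) / norm (y - x)) \<longlongrightarrow> 0) (at x)"
  shows "(f has_derivative f') (at x)"
  unfolding has_derivative_within
proof (intro conjI bl)
  have eq: "\<And>y. norm ((1 / norm (y - x)) *\<^sub>R (f y - (f x + f' (y - x)))) = norm (f y - f x - f' (y - x)) / norm (y - x)"
    by (simp add: diff_diff_eq)
  have "((\<lambda>y. norm ((1 / norm (y - x)) *\<^sub>R (f y - (f x + f' (y - x))))) \<longlongrightarrow> 0) (at x)"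
    unfolding eq by (rule T)
  then show "((\<lambda>y. (1 / norm (y - x)) *\<^sub>R (f y - (f x + f' (y - x)))) \<longlongrightarrow> 0) (at x within UNIV)"
    by (simp only: tendsto_norm_zero_iff)
qed

lemma bl_intro:
  assumes "linear g" "\<And>h. norm (g h) \<le> C * norm h"
  shows "bounded_linear g"
  unfolding bounded_linear_def bounded_linear_axioms_def
  using assms by (metis mult.commute)

lemma smooth_facts:
  fixes f :: "'a::real_normed_vector \<Rightarrow> 'b::real_normed_vector"
  assumes "smooth_on S f"
  obtains F :: "nat \<Rightarrow> 'a \<Rightarrow> 'a list \<Rightarrow> 'b" where
   "open S"
   "\<And>x. x\<in>S \<Longrightarrow> (f has_derivative (\<lambda>h. F 1 x [h])) (at x)"
   "\<And>x w. x\<in>S \<Longrightarrow> ((\<lambda>y. F 1 y [w]) has_derivative (\<lambda>h. F 2 x [h,w])) (at x)"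
   "\<And>x b. x\<in>S \<Longrightarrow> linear (\<lambda>h. F 2 x [h,b])"
   "\<And>x a. x\<in>S \<Longrightarrow> linear (\<lambda>h. F 2 x [a,h])"
   "\<And>x. x\<in>S \<Longrightarrow> \<exists>C\<ge>0. \<forall>a b. norm (F 2 x [a,b]) \<le> C * norm a * norm b"
   "\<And>x e. x\<in>S \<Longrightarrow> e > 0 \<Longrightarrow> \<exists>d>0. \<forall>y\<in>S. dist y x < d \<longrightarrow>
        (\<forall>a b. norm (F 2 y [a,b] - F 2 x [a,b]) \<le> e * norm a * norm b)"
proof -
  have oS: "open S" using assms unfolding smooth_on_def by blast
  obtain F :: "nat \<Rightarrow> 'a \<Rightarrow> 'a list \<Rightarrow> 'b" where
    F0: "\<forall>x\<in>S. F 0 x [] = f x" and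
    M: "\<And>k x. x\<in>S \<Longrightarrow> bounded_multilinear_k k (F k x) \<and>
           ((\<lambda>y. mlnorm k (\<lambda>vs. F k y vs - F k x vs - F (Suc k) x ((y - x) # vs)) / norm (y - x))
               \<longlongrightarrow> 0) (at x) \<and>
           ((\<lambda>y. mlnorm (Suc k) (\<lambda>vs. F (Suc k) y vs - F (Suc k) x vs)) \<longlongrightarrow> 0) (at x)"
    using assms unfolding smooth_on_def by blast
  have B1: "\<And>x. x\<in>S \<Longrightarrow> linear (\<lambda>h. F 1 x [h]) \<and> (\<exists>C\<ge>0. \<forall>w. norm (F 1 x [w]) \<le> C * norm w)"
    using M[of _ 1] bml1 by blast
  have B2: "\<And>x. x\<in>S \<Longrightarrow> (\<forall>b. linear (\<lambda>h. F 2 x [h,b])) \<and> (\<forall>a. linear (\<lambda>h. F 2 x [a,h])) \<and>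
      (\<exists>C\<ge>0. \<forall>a b. norm (F 2 x [a,b]) \<le> C * norm a * norm b)"
    using M[of _ 2] bml2 by blast
  show thesis
  proof (rule that[of F])
    show "open S" by (rule oS)
  next
    fix x assume x: "x \<in> S"
    obtain C where C: "\<And>w. norm (F 1 x [w]) \<le> C * norm w" using B1[OF x] by blast
    show "(f has_derivative (\<lambda>h. F 1 x [h])) (at x)"
    proof (rule deriv_from_quot)
      show "bounded_linear (\<lambda>h. F 1 x [h])" using B1[OF x] C bl_intro by blast
      have T: "((\<lambda>y. mlnorm 0 (\<lambda>vs. F 0 y vs - F 0 x vs - F 1 x ((y - x) # vs)) / norm (y - x))
               \<longlongrightarrow> 0) (at x)" using M[OF x, of 0] by simp
      show "((\<lambda>y. norm (f y - f x - F 1 x [y - x]) / norm (y - x)) \<longlongrightarrow> 0) (at x)"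
      proof (rule Lim_transform_eventually[OF T])
        show "\<forall>\<^sub>F y in at x. mlnorm 0 (\<lambda>vs. F 0 y vs - F 0 x vs - F 1 x ((y - x) # vs)) / norm (y - x)
             = norm (f y - f x - F 1 x [y - x]) / norm (y - x)"
          using eventually_at_in_open'[OF oS x] by eventually_elim (use F0 x in \<open>simp add: ml0\<close>)
      qed
    qed
  next
    fix x w assume x: "x \<in> S"
    obtain C2 where C2: "C2 \<ge> 0" "\<And>a b. norm (F 2 x [a,b]) \<le> C2 * norm a * norm b" using B2[OF x] by blast
    show "((\<lambda>y. F 1 y [w]) has_derivative (\<lambda>h. F 2 x [h,w])) (at x)"
    proof (rule deriv_from_quot)
      show "bounded_linear (\<lambda>h. F 2 x [h,w])"
        by (rule bl_intro[where C="C2 * norm w"]) (use B2[OF x] C2 in \<open>auto simp: ac_simps\<close>)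
      define E where "E y = (\<lambda>vs. F 1 y vs - F 1 x vs - F 2 x ((y - x) # vs))" for y
      have T: "((\<lambda>y. mlnorm 1 (E y) / norm (y - x) * norm w) \<longlongrightarrow> 0) (at x)"
      proof (rule tendsto_mult_left_zero)
        show "((\<lambda>y. mlnorm 1 (E y) / norm (y - x)) \<longlongrightarrow> 0) (at x)"
          using M[OF x, of 1] unfolding E_def by (simp add: numeral_2_eq_2)
      qed
      show "((\<lambda>y. norm (F 1 y [w] - F 1 x [w] - F 2 x [y - x, w]) / norm (y - x)) \<longlongrightarrow> 0) (at x)"
      proof (rule Lim_null_comparison[OF _ T])
        show "\<forall>\<^sub>F y in at x. norm (norm (F 1 y [w] - F 1 x [w] - F 2 x [y - x, w]) / norm (y - x))
               \<le> mlnorm 1 (E y) / norm (y - x) * norm w"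
          using eventually_at_in_open'[OF oS x]
        proof eventually_elim
          case (elim y)
          obtain Cy where Cy: "Cy \<ge> 0" "\<And>w. norm (F 1 y [w]) \<le> Cy * norm w" using B1[OF elim] by blast
          obtain Cx where Cx: "Cx \<ge> 0" "\<And>w. norm (F 1 x [w]) \<le> Cx * norm w" using B1[OF x] by blast
          have lin: "linear (\<lambda>h. E y [h])" unfolding E_def
            using B1[OF elim] B1[OF x] B2[OF x]
            by (intro linear_compose_sub) auto
          have bnd: "norm (E y [v]) \<le> Cy + Cx + C2 * norm (y - x)" if "norm v \<le> 1" for v
          proof -
            have "norm (E y [v]) \<le> norm (F 1 y [v]) + norm (F 1 x [v]) + norm (F 2 x [y - x, v])"
              unfolding E_def using norm_triangle_ineq4[of "F 1 y [v] - F 1 x [v]" "F 2 x [y-x,v]"]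
                norm_triangle_ineq4[of "F 1 y [v]" "F 1 x [v]"] by linarith
            also have "\<dots> \<le> Cy * norm v + Cx * norm v + C2 * norm (y - x) * norm v"
              using Cy Cx C2 by (intro add_mono) auto
            also have "\<dots> \<le> Cy + Cx + C2 * norm (y - x)"
              using that Cy Cx C2 by (intro add_mono mult_left_le) auto
            finally show ?thesis .
          qed
          have "norm (E y [w]) \<le> mlnorm 1 (E y) * norm w" by (rule ml1[OF lin bnd])
          then show ?case unfolding E_def by (simp add: divide_right_mono)
        qed
      qed
    qed
  next
    fix x b assume "x \<in> S" then show "linear (\<lambda>h. F 2 x [h,b])" using B2 by blast
  next
    fix x a assume "x \<in> S" then show "linear (\<lambda>h. F 2 x [a,h])" using B2 by blast
  next
    fix x assume "x \<in> S" then show "\<exists>C\<ge>0. \<forall>a b. norm (F 2 x [a,b]) \<le> C * norm a * norm b" using B2 by blast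
  next
    fix x and e :: real assume x: "x \<in> S" and e: "e > 0"
    have T: "((\<lambda>y. mlnorm 2 (\<lambda>vs. F 2 y vs - F 2 x vs)) \<longlongrightarrow> 0) (at x)"
      using M[OF x, of 1] by (simp add: numeral_2_eq_2)
    then obtain d where d: "d > 0" "\<And>y. y \<noteq> x \<Longrightarrow> dist y x < d \<Longrightarrow> dist (mlnorm 2 (\<lambda>vs. F 2 y vs - F 2 x vs)) 0 < e"
      using e unfolding tendsto_iff eventually_at by blast
    show "\<exists>d>0. \<forall>y\<in>S. dist y x < d \<longrightarrow> (\<forall>a b. norm (F 2 y [a,b] - F 2 x [a,b]) \<le> e * norm a * norm b)"
    proof (intro exI[of _ d] conjI ballI impI allI d(1))
      fix y a b assume y: "y \<in> S" and dy: "dist y x < d"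
      show "norm (F 2 y [a,b] - F 2 x [a,b]) \<le> e * norm a * norm b"
      proof (cases "y = x")
        case True then show ?thesis using e by simp
      next
        case False
        obtain Cy where Cy: "Cy \<ge> 0" "\<And>a b. norm (F 2 y [a,b]) \<le> Cy * norm a * norm b" using B2[OF y] by blast
        obtain Cx where Cx: "Cx \<ge> 0" "\<And>a b. norm (F 2 x [a,b]) \<le> Cx * norm a * norm b" using B2[OF x] by blast
        have l1: "linear (\<lambda>h. F 2 y [h,b] - F 2 x [h,b])" for b
          using B2[OF y] B2[OF x] by (intro linear_compose_sub) auto
        have l2: "linear (\<lambda>h. F 2 y [a,h] - F 2 x [a,h])" for a
          using B2[OF y] B2[OF x] by (intro linear_compose_sub) auto
        have bnd: "norm (F 2 y [a,b] - F 2 x [a,b]) \<le> Cy + Cx" if "norm a \<le> 1" "norm b \<le> 1" for a b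
        proof -
          have "norm (F 2 y [a,b] - F 2 x [a,b]) \<le> Cy * norm a * norm b + Cx * norm a * norm b"
            using Cy(2)[of a b] Cx(2)[of a b] norm_triangle_ineq4[of "F 2 y [a,b]" "F 2 x [a,b]"] by linarith
          also have "\<dots> \<le> Cy + Cx"
            using that Cy Cx by (intro add_mono) (auto simp: mult.assoc intro!: mult_left_le mult_le_one)
          finally show ?thesis .
        qed
        have "norm (F 2 y [a,b] - F 2 x [a,b]) \<le> mlnorm 2 (\<lambda>vs. F 2 y vs - F 2 x vs) * norm a * norm b"
          using ml2[of "\<lambda>vs. F 2 y vs - F 2 x vs", OF l1 l2 bnd] by simp
        also have "\<dots> \<le> e * norm a * norm b"
          using d(2)[OF False dy] by (intro mult_right_mono) auto
        finally show ?thesis .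
      qed
    qed
  qed
qed

lemma mvi:
  fixes f :: "real \<Rightarrow> 'b::real_normed_vector"
  assumes d: "\<And>x. \<bar>x\<bar> < r \<Longrightarrow> (f has_vector_derivative f' x) (at x)"
    and B: "\<And>x. \<bar>x\<bar> < r \<Longrightarrow> norm (f' x) \<le> B"
    and a: "\<bar>a\<bar> < r" and b: "\<bar>b\<bar> < r"
  shows "norm (f b - f a) \<le> 3 * B * \<bar>b - a\<bar>"
proof -
  let ?S = "{-r<..<r}"
  have n1: "norm (f b - f a - (b - a) *\<^sub>R f' a) \<le> norm (b - a) * (2 * B)"
  proof (rule vector_differentiable_bound_linearization[where S="?S"])
    show "\<And>x. x \<in> ?S \<Longrightarrow> (f has_vector_derivative f' x) (at x within ?S)"
      using d by (auto intro: has_vector_derivative_at_within)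
    show "closed_segment a b \<subseteq> ?S" by (intro closed_segment_subset) (use a b in \<open>auto simp: convex_real_interval\<close>)
    show "\<And>x. x \<in> ?S \<Longrightarrow> norm (f' x - f' a) \<le> 2 * B"
      using B a by (smt (verit) greaterThanLessThan_iff norm_triangle_ineq4 abs_less_iff)
    show "a \<in> ?S" using a by auto
  qed
  have "norm (f b - f a - (b - a) *\<^sub>R f' a) \<le> \<bar>b - a\<bar> * (2 * B)" using n1 by (simp only: real_norm_def)
  moreover have "norm ((b - a) *\<^sub>R f' a) \<le> \<bar>b - a\<bar> * B" using B[OF a] by (simp add: mult_left_mono)
  moreover have "norm ((f b - f a - (b - a) *\<^sub>R f' a) + (b - a) *\<^sub>R f' a) \<le> norm (f b - f a - (b - a) *\<^sub>R f' a) + norm ((b - a) *\<^sub>R f' a)"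
    by (rule norm_triangle_ineq)
  then have "norm (f b - f a) \<le> norm (f b - f a - (b - a) *\<^sub>R f' a) + norm ((b - a) *\<^sub>R f' a)"
    by simp
  moreover have "\<bar>b-a\<bar>*(2*B) + \<bar>b-a\<bar>*B = 3*B*\<bar>b-a\<bar>" by (simp add: algebra_simps)
  ultimately show ?thesis by linarith
qed

lemma mixed:
  fixes k :: "real \<Rightarrow> real \<Rightarrow> 'b::real_normed_vector"
  assumes dpos: "\<delta> > 0"
   and dG: "\<And>\<sigma> \<tau>. \<bar>\<sigma>\<bar> < \<delta> \<Longrightarrow> \<bar>\<tau>\<bar> < \<delta> \<Longrightarrow> ((\<lambda>\<sigma>. k \<sigma> \<tau>) has_vector_derivative G \<sigma> \<tau>) (at \<sigma>)"
   and dM: "\<And>\<sigma> \<tau>. \<bar>\<sigma>\<bar> < \<delta> \<Longrightarrow> \<bar>\<tau>\<bar> < \<delta> \<Longrightarrow> ((\<lambda>\<tau>. G \<sigma> \<tau>) has_vector_derivative M \<sigma> \<tau>) (at \<tau>)"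
   and cM: "\<And>e. e > 0 \<Longrightarrow> \<exists>d>0. \<forall>\<sigma> \<tau>. \<bar>\<sigma>\<bar> < d \<and> \<bar>\<tau>\<bar> < d \<longrightarrow> norm (M \<sigma> \<tau> - M 0 0) \<le> e"
   and e: "e > 0"
  shows "\<exists>d>0. \<forall>s t. \<bar>s\<bar> < d \<and> \<bar>t\<bar> < d \<longrightarrow>
           norm (k s t - k s 0 - k 0 t + k 0 0 - (s * t) *\<^sub>R M 0 0) \<le> e * \<bar>s\<bar> * \<bar>t\<bar>"
proof -
  define L where "L = M 0 0"
  obtain d0 where d0: "d0 > 0" "\<And>\<sigma> \<tau>. \<bar>\<sigma>\<bar> < d0 \<Longrightarrow> \<bar>\<tau>\<bar> < d0 \<Longrightarrow> norm (M \<sigma> \<tau> - L) \<le> e / 9"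
    using cM[of "e/9"] e unfolding L_def by auto
  define d where "d = min \<delta> d0"
  have dp: "d > 0" using dpos d0 by (simp add: d_def)
  have inner: "norm (G \<sigma> t - G \<sigma> 0 - t *\<^sub>R L) \<le> e / 3 * \<bar>t\<bar>" if s: "\<bar>\<sigma>\<bar> < d" and t: "\<bar>t\<bar> < d" for \<sigma> t
  proof -
    have "norm ((G \<sigma> t - t *\<^sub>R L) - (G \<sigma> 0 - 0 *\<^sub>R L)) \<le> 3 * (e/9) * \<bar>t - 0\<bar>"
    proof (rule mvi[where f="\<lambda>\<tau>. G \<sigma> \<tau> - \<tau> *\<^sub>R L" and r=d and f'="\<lambda>\<tau>. M \<sigma> \<tau> - L" and a=0 and b=t])
      fix x :: real assume x: "\<bar>x\<bar> < d"
      show "((\<lambda>\<tau>. G \<sigma> \<tau> - \<tau> *\<^sub>R L) has_vector_derivative M \<sigma> x - L) (at x)"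
      proof (rule has_vector_derivative_diff)
        show "((\<lambda>\<tau>. G \<sigma> \<tau>) has_vector_derivative M \<sigma> x) (at x)"
          using dM[of \<sigma> x] s x unfolding d_def by auto
        show "((\<lambda>\<tau>. \<tau> *\<^sub>R L) has_vector_derivative L) (at x)"
          unfolding has_vector_derivative_def
          by (rule bounded_linear_imp_has_derivative[OF bounded_linear_scaleR_left])
      qed
      show "norm (M \<sigma> x - L) \<le> e / 9" using d0(2)[of \<sigma> x] s x by (simp add: d_def)
    next
      show "\<bar>0::real\<bar> < d" using dp by simp
    next
      show "\<bar>t\<bar> < d" by (rule t)
    qed
    then show ?thesis by (simp add: algebra_simps)
  qed
  show ?thesis
  proof (intro exI[of _ d] conjI allI impI dp)
    fix s t :: real assume st: "\<bar>s\<bar> < d \<and> \<bar>t\<bar> < d"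
    have "norm ((k s t - k s 0 - (s * t) *\<^sub>R L) - (k 0 t - k 0 0 - (0 * t) *\<^sub>R L)) \<le> 3 * (e / 3 * \<bar>t\<bar>) * \<bar>s - 0\<bar>"
    proof (rule mvi[where f="\<lambda>\<sigma>. k \<sigma> t - k \<sigma> 0 - (\<sigma> * t) *\<^sub>R L" and r=d and f'="\<lambda>\<sigma>. G \<sigma> t - G \<sigma> 0 - t *\<^sub>R L" and a=0 and b=s])
      fix x :: real assume x: "\<bar>x\<bar> < d"
      have "((\<lambda>\<sigma>. \<sigma> *\<^sub>R (t *\<^sub>R L)) has_vector_derivative t *\<^sub>R L) (at x)"
          unfolding has_vector_derivative_def
          by (rule bounded_linear_imp_has_derivative[OF bounded_linear_scaleR_left])
      then have "((\<lambda>\<sigma>. (\<sigma> * t) *\<^sub>R L) has_vector_derivative t *\<^sub>R L) (at x)"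
        by (simp add: scaleR_scaleR)
      moreover have "((\<lambda>\<sigma>. k \<sigma> t) has_vector_derivative G x t) (at x)"
        using dG[of x t] x st unfolding d_def by simp
      moreover have "((\<lambda>\<sigma>. k \<sigma> 0) has_vector_derivative G x 0) (at x)"
        using dG[of x 0] x dpos unfolding d_def by simp
      ultimately show "((\<lambda>\<sigma>. k \<sigma> t - k \<sigma> 0 - (\<sigma> * t) *\<^sub>R L) has_vector_derivative G x t - G x 0 - t *\<^sub>R L) (at x)"
        by (intro has_vector_derivative_diff)
      show "norm (G x t - G x 0 - t *\<^sub>R L) \<le> e / 3 * \<bar>t\<bar>" using inner x st by blast
    next
      show "\<bar>0::real\<bar> < d" using dp by simp
    next
      show "\<bar>s\<bar> < d" using st by simp
    qed
    then show "norm (k s t - k s 0 - k 0 t + k 0 0 - (s * t) *\<^sub>R M 0 0) \<le> e * \<bar>s\<bar> * \<bar>t\<bar>"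
      unfolding L_def by (simp add: algebra_simps)
  qed
qed

lemma cont_M:
  fixes P :: "real \<Rightarrow> real \<Rightarrow> 'p::metric_space" and A B :: "real \<Rightarrow> real \<Rightarrow> 'x::real_normed_vector"
    and T :: "'p \<Rightarrow> 'x list \<Rightarrow> 'y::real_normed_vector"
  assumes Pc: "\<And>e. e>0 \<Longrightarrow> \<exists>d>0. \<forall>\<sigma> \<tau>. \<bar>\<sigma>\<bar><d \<and> \<bar>\<tau>\<bar><d \<longrightarrow> dist (P \<sigma> \<tau>) (P 0 0) < e"
   and Ac: "\<And>e. e>0 \<Longrightarrow> \<exists>d>0. \<forall>\<sigma> \<tau>. \<bar>\<sigma>\<bar><d \<and> \<bar>\<tau>\<bar><d \<longrightarrow> norm (A \<sigma> \<tau> - A 0 0) < e"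
   and Bc: "\<And>e. e>0 \<Longrightarrow> \<exists>d>0. \<forall>\<sigma> \<tau>. \<bar>\<sigma>\<bar><d \<and> \<bar>\<tau>\<bar><d \<longrightarrow> norm (B \<sigma> \<tau> - B 0 0) < e"
   and Tc: "\<And>e. e>0 \<Longrightarrow> \<exists>d>0. \<forall>p\<in>W. dist p (P 0 0) < d \<longrightarrow>
              (\<forall>a b. norm (T p [a,b] - T (P 0 0) [a,b]) \<le> e * norm a * norm b)"
   and dpos: "\<delta> > 0" and PW: "\<And>\<sigma> \<tau>. \<bar>\<sigma>\<bar><\<delta> \<Longrightarrow> \<bar>\<tau>\<bar><\<delta> \<Longrightarrow> P \<sigma> \<tau> \<in> W"
   and l1: "\<And>b. linear (\<lambda>h. T (P 0 0) [h,b])" and l2: "\<And>a. linear (\<lambda>h. T (P 0 0) [a,h])"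
   and C: "C \<ge> 0" "\<And>a b. norm (T (P 0 0) [a,b]) \<le> C * norm a * norm b"
   and e: "e > 0"
  shows "\<exists>d>0. \<forall>\<sigma> \<tau>. \<bar>\<sigma>\<bar><d \<and> \<bar>\<tau>\<bar><d \<longrightarrow>
           norm (T (P \<sigma> \<tau>) [A \<sigma> \<tau>, B \<sigma> \<tau>] - T (P 0 0) [A 0 0, B 0 0]) \<le> e"
proof -
  define p0 where "p0 = P 0 0"
  define a0 where "a0 = A 0 0"
  define b0 where "b0 = B 0 0"
  define NA where "NA = norm a0 + 1"
  define NB where "NB = norm b0 + 1"
  have NA1: "NA \<ge> 1" and NB1: "NB \<ge> 1" by (auto simp: NA_def NB_def)
  define e1 where "e1 = e / (3 * NA * NB)"
  have e1p: "e1 > 0" using e NA1 NB1 by (simp add: e1_def)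
  define \<eta> where "\<eta> = min 1 (e / (3 * (C + 1) * NA * NB))"
  have etap: "\<eta> > 0" using e NA1 NB1 C by (simp add: \<eta>_def)
  obtain dT where dT: "dT > 0" "\<And>p a b. p \<in> W \<Longrightarrow> dist p p0 < dT \<Longrightarrow> norm (T p [a,b] - T p0 [a,b]) \<le> e1 * norm a * norm b"
    using Tc[OF e1p] unfolding p0_def by blast
  obtain dP where dP: "dP > 0" "\<And>\<sigma> \<tau>. \<bar>\<sigma>\<bar><dP \<Longrightarrow> \<bar>\<tau>\<bar><dP \<Longrightarrow> dist (P \<sigma> \<tau>) p0 < dT"
    using Pc[OF dT(1)] unfolding p0_def by blast
  obtain dA where dA: "dA > 0" "\<And>\<sigma> \<tau>. \<bar>\<sigma>\<bar><dA \<Longrightarrow> \<bar>\<tau>\<bar><dA \<Longrightarrow> norm (A \<sigma> \<tau> - a0) < \<eta>"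
    using Ac[OF etap] unfolding a0_def by blast
  obtain dB where dB: "dB > 0" "\<And>\<sigma> \<tau>. \<bar>\<sigma>\<bar><dB \<Longrightarrow> \<bar>\<tau>\<bar><dB \<Longrightarrow> norm (B \<sigma> \<tau> - b0) < \<eta>"
    using Bc[OF etap] unfolding b0_def by blast
  define d where "d = min (min \<delta> dP) (min dA dB)"
  have dp: "d > 0" using dpos dP dA dB by (simp add: d_def)
  show ?thesis
  proof (intro exI[of _ d] conjI allI impI dp)
    fix \<sigma> \<tau> :: real assume st: "\<bar>\<sigma>\<bar><d \<and> \<bar>\<tau>\<bar><d"
    define p where "p = P \<sigma> \<tau>"
    define a where "a = A \<sigma> \<tau>"
    define b where "b = B \<sigma> \<tau>"
    have pW: "p \<in> W" using PW st by (simp add: p_def d_def)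
    have pd: "dist p p0 < dT" using dP(2) st by (simp add: p_def d_def)
    have ae: "norm (a - a0) < \<eta>" using dA(2) st by (simp add: a_def d_def)
    have be: "norm (b - b0) < \<eta>" using dB(2) st by (simp add: b_def d_def)
    have eta1: "\<eta> \<le> 1" by (simp add: \<eta>_def)
    have na: "norm a \<le> NA"
      using norm_triangle_ineq2[of a a0] ae eta1 unfolding NA_def by linarith
    have nb: "norm b \<le> NB"
      using norm_triangle_ineq2[of b b0] be eta1 unfolding NB_def by linarith
    have etaB: "(C + 1) * NA * NB * \<eta> \<le> e / 3"
    proof -
      have "\<eta> \<le> e / (3 * (C + 1) * NA * NB)" by (simp add: \<eta>_def)
      moreover have "(C + 1) * NA * NB > 0" using C NA1 NB1 by simp
      ultimately have "(C + 1) * NA * NB * \<eta> \<le> (C + 1) * NA * NB * (e / (3 * (C + 1) * NA * NB))"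
        by (intro mult_left_mono) auto
      also have "\<dots> = e / 3"
      proof -
        define X where "X = (C + 1) * NA * NB"
        have X0: "X \<noteq> 0" using C NA1 NB1 by (simp add: X_def)
        have "3 * (C + 1) * NA * NB = 3 * X" by (simp add: X_def ac_simps)
        then show ?thesis using X0 unfolding X_def[symmetric] by simp
      qed
      finally show ?thesis .
    qed
    have na0: "norm a0 \<le> NA" by (simp add: NA_def)
    have t1: "norm (T p [a,b] - T p0 [a,b]) \<le> e / 3"
    proof -
      have "norm (T p [a,b] - T p0 [a,b]) \<le> e1 * norm a * norm b" by (rule dT(2)[OF pW pd])
      also have "\<dots> \<le> e1 * NA * NB"
      proof -
        have "norm a * norm b \<le> NA * NB" using na nb NA1 by (intro mult_mono) auto
        then show ?thesis using e1p by (simp add: mult.assoc mult_left_mono)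
      qed
      also have "\<dots> = e / 3" using NA1 NB1 by (simp add: e1_def field_simps)
      finally show ?thesis .
    qed
    have t2: "norm (T p0 [a,b] - T p0 [a0,b]) \<le> e / 3"
    proof -
      have "T p0 [a,b] - T p0 [a0,b] = T p0 [a - a0, b]"
        using linear_diff[OF l1[of b, folded p0_def]] by simp
      then have "norm (T p0 [a,b] - T p0 [a0,b]) \<le> C * norm (a - a0) * norm b" using C(2) unfolding p0_def by simp
      also have "\<dots> \<le> (C + 1) * (NA * \<eta>) * NB"
      proof -
        have "\<eta> \<le> NA * \<eta>" using NA1 etap by simp
        then have "norm (a - a0) \<le> NA * \<eta>" using ae by linarith
        then show ?thesis using C nb NA1 etap by (intro mult_mono) auto
      qed
      also have "\<dots> = (C + 1) * NA * NB * \<eta>" by (simp add: ac_simps)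
      finally show ?thesis using etaB by linarith
    qed
    have t3: "norm (T p0 [a0,b] - T p0 [a0,b0]) \<le> e / 3"
    proof -
      have "T p0 [a0,b] - T p0 [a0,b0] = T p0 [a0, b - b0]"
        using linear_diff[OF l2[of a0, folded p0_def]] by simp
      then have "norm (T p0 [a0,b] - T p0 [a0,b0]) \<le> C * norm a0 * norm (b - b0)" using C(2) unfolding p0_def by simp
      also have "\<dots> \<le> (C + 1) * NA * (NB * \<eta>)"
      proof -
        have "\<eta> \<le> NB * \<eta>" using NB1 etap by simp
        then have "norm (b - b0) \<le> NB * \<eta>" using be by linarith
        moreover have "C * norm a0 \<le> (C + 1) * NA" using C na0 NA1 by (intro mult_mono) auto
        ultimately show ?thesis using C NA1 na0 NB1 etap by (intro mult_mono) auto
      qed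
      also have "\<dots> = (C + 1) * NA * NB * \<eta>" by (simp add: ac_simps)
      finally show ?thesis using etaB by linarith
    qed
    have "norm (T p [a,b] - T p0 [a0,b0]) \<le> norm (T p [a,b] - T p0 [a,b]) + norm (T p0 [a,b] - T p0 [a0,b]) + norm (T p0 [a0,b] - T p0 [a0,b0])"
      using norm_triangle_ineq[of "T p [a,b] - T p0 [a,b]" "T p0 [a,b] - T p0 [a0,b]"]
        norm_triangle_ineq[of "T p [a,b] - T p0 [a0,b]" "T p0 [a0,b] - T p0 [a0,b0]"] by simp
    then show "norm (T (P \<sigma> \<tau>) [A \<sigma> \<tau>, B \<sigma> \<tau>] - T (P 0 0) [A 0 0, B 0 0]) \<le> e"
      using t1 t2 t3 unfolding p_def a_def b_def p0_def a0_def b0_def by linarith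
  qed
qed

context
  fixes K :: "'m \<Rightarrow> 'm \<Rightarrow> complex" and H and ip
  assumes R: "rkhs K H ip"
begin

lemma H0: "(\<lambda>x. 0) \<in> H" using R unfolding rkhs_def by blast
lemma Hadd: "f \<in> H \<Longrightarrow> g \<in> H \<Longrightarrow> (\<lambda>x. f x + g x) \<in> H" using R unfolding rkhs_def by blast
lemma Hscale: "f \<in> H \<Longrightarrow> (\<lambda>x. c * f x) \<in> H" using R unfolding rkhs_def by blast
lemma Hdiff: "f \<in> H \<Longrightarrow> g \<in> H \<Longrightarrow> (\<lambda>x. f x - g x) \<in> H"
  using Hadd[of f "\<lambda>x. (-1) * g x"] Hscale[of g "-1"] by simp
lemma Hdivr: "f \<in> H \<Longrightarrow> (\<lambda>x. f x / c) \<in> H"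
  using Hscale[of f "inverse c"] by (simp add: divide_inverse mult.commute)
lemma HK: "(\<lambda>x. K x m) \<in> H" using R unfolding rkhs_def by blast
lemma repr: "f \<in> H \<Longrightarrow> ip f (\<lambda>x. K x m) = f m" using R unfolding rkhs_def by metis
lemma ip_add1: "f \<in> H \<Longrightarrow> g \<in> H \<Longrightarrow> h \<in> H \<Longrightarrow> ip (\<lambda>x. f x + g x) h = ip f h + ip g h"
  using R unfolding rkhs_def by blast
lemma ip_scale1: "f \<in> H \<Longrightarrow> g \<in> H \<Longrightarrow> ip (\<lambda>x. c * f x) g = c * ip f g"
  using R unfolding rkhs_def by blast
lemma ip_cnj: "f \<in> H \<Longrightarrow> g \<in> H \<Longrightarrow> ip g f = cnj (ip f g)"
  using R unfolding rkhs_def by blast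
lemma ip_pos: "f \<in> H \<Longrightarrow> Re (ip f f) \<ge> 0" using R unfolding rkhs_def by blast
lemma ip_zero_imp: "f \<in> H \<Longrightarrow> ip f f = 0 \<Longrightarrow> f = (\<lambda>x. 0)" using R unfolding rkhs_def by blast
lemma complete: "(\<forall>n. X n \<in> H) \<Longrightarrow>
          (\<forall>e>0. \<exists>N. \<forall>m\<ge>N. \<forall>n\<ge>N. hnorm ip (\<lambda>x. X m x - X n x) < e) \<Longrightarrow>
          (\<exists>f\<in>H. (\<lambda>n. hnorm ip (\<lambda>x. X n x - f x)) \<longlonglongrightarrow> 0)"
  using R unfolding rkhs_def by blast

lemma ip_add2: "f \<in> H \<Longrightarrow> g \<in> H \<Longrightarrow> h \<in> H \<Longrightarrow> ip h (\<lambda>x. f x + g x) = ip h f + ip h g"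
  by (simp add: ip_cnj[of _ h] Hadd ip_add1)
lemma ip_scale2: "f \<in> H \<Longrightarrow> g \<in> H \<Longrightarrow> ip g (\<lambda>x. c * f x) = cnj c * ip g f"
  by (simp add: ip_cnj[of _ g] Hscale ip_scale1)
lemma ip_diff1: "f \<in> H \<Longrightarrow> g \<in> H \<Longrightarrow> h \<in> H \<Longrightarrow> ip (\<lambda>x. f x - g x) h = ip f h - ip g h"
proof -
  assume a: "f \<in> H" "g \<in> H" "h \<in> H"
  have 1: "ip (\<lambda>x. f x + (-1) * g x) h = ip f h + ip (\<lambda>x. (-1) * g x) h"
    by (rule ip_add1[OF a(1) Hscale[OF a(2)] a(3)])
  have 2: "ip (\<lambda>x. (-1) * g x) h = - ip g h" using ip_scale1[OF a(2) a(3), of "-1"] by simp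
  have 3: "(\<lambda>x. f x - g x) = (\<lambda>x. f x + (-1) * g x)" by simp
  show ?thesis unfolding 3 1 2 by simp
qed
lemma ip_diff2: "f \<in> H \<Longrightarrow> g \<in> H \<Longrightarrow> h \<in> H \<Longrightarrow> ip h (\<lambda>x. f x - g x) = ip h f - ip h g"
  by (simp add: ip_cnj[of _ h] Hdiff ip_diff1)
lemma ip_divr1: "f \<in> H \<Longrightarrow> g \<in> H \<Longrightarrow> ip (\<lambda>x. f x / c) g = ip f g / c"
  using ip_scale1[of f g "inverse c"] by (simp add: divide_inverse mult.commute)
lemma ip_divr2: "f \<in> H \<Longrightarrow> g \<in> H \<Longrightarrow> ip g (\<lambda>x. f x / complex_of_real c) = ip g f / complex_of_real c"
  using ip_scale2[of f g "inverse (complex_of_real c)"] by (simp add: divide_inverse mult.commute)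
lemma ip_self_real: "f \<in> H \<Longrightarrow> ip f f = complex_of_real (Re (ip f f))"
proof -
  assume f: "f \<in> H"
  have "Im (ip f f) = Im (cnj (ip f f))" using ip_cnj[OF f f] by simp
  then have "Im (ip f f) = 0" by simp
  then show ?thesis by (simp add: complex_eq_iff)
qed
lemma ip_0_2: "f \<in> H \<Longrightarrow> ip f (\<lambda>x. 0) = 0"
  using ip_scale2[of f f 0] by simp

lemma hnorm_sq: assumes fH: "f \<in> H" shows "(hnorm ip f)^2 = Re (ip f f)"
proof -
  have "0 \<le> Re (ip f f)" by (rule ip_pos[OF fH])
  then show ?thesis unfolding hnorm_def by simp
qed
lemma hnorm_ge0: assumes fH: "f \<in> H" shows "hnorm ip f \<ge> 0"
  unfolding hnorm_def using ip_pos[OF fH] by simp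

lemma CS: assumes f: "f \<in> H" and g: "g \<in> H"
  shows "cmod (ip f g) \<le> hnorm ip f * hnorm ip g"
proof (cases "ip g g = 0")
  case True
  then have "g = (\<lambda>x. 0)" using ip_zero_imp g by blast
  then show ?thesis using ip_0_2 f hnorm_ge0[OF f] hnorm_ge0[OF g] by simp
next
  case False
  define b where "b = Re (ip g g)"
  have gg: "ip g g = complex_of_real b" using ip_self_real g b_def by blast
  have b0: "b \<noteq> 0" using False gg by auto
  have bpos: "b > 0" using b0 ip_pos[OF g] b_def by simp
  define a where "a = ip f g"
  define l where "l = a / ip g g"
  have lg: "(\<lambda>x. l * g x) \<in> H" using Hscale g by blast
  have "0 \<le> Re (ip (\<lambda>x. f x - l * g x) (\<lambda>x. f x - l * g x))"
    using ip_pos Hdiff f lg by blast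
  also have "ip (\<lambda>x. f x - l * g x) (\<lambda>x. f x - l * g x)
      = ip f f - cnj l * ip f g - l * ip g f + l * cnj l * ip g g"
    using f g lg by (simp add: ip_diff1 ip_diff2 Hdiff ip_scale1 ip_scale2 algebra_simps)
  also have "\<dots> = ip f f - a * cnj a / complex_of_real b"
    unfolding l_def gg using bpos ip_cnj[OF f g] a_def
    by (simp add: field_simps)
  also have "a * cnj a = complex_of_real ((cmod a)^2)" using complex_norm_square[of a] by simp
  also have "ip f f - complex_of_real ((cmod a)^2) / complex_of_real b = ip f f - complex_of_real ((cmod a)^2 / b)"
    by simp
  finally have "(cmod a)^2 / b \<le> Re (ip f f)" by simp
  then have "(cmod a)^2 \<le> Re (ip f f) * b" using bpos by (simp add: field_simps)
  also have "\<dots> = (hnorm ip f * hnorm ip g)^2"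
    using hnorm_sq f g b_def by (simp add: power_mult_distrib)
  finally have "(cmod (ip f g))^2 \<le> (hnorm ip f * hnorm ip g)^2" unfolding a_def .
  moreover have "0 \<le> hnorm ip f * hnorm ip g" using hnorm_ge0[OF f] hnorm_ge0[OF g] by simp
  ultimately show ?thesis by (rule power2_le_imp_le)
qed

lemma tri: assumes f: "f \<in> H" and g: "g \<in> H"
  shows "hnorm ip (\<lambda>x. f x + g x) \<le> hnorm ip f + hnorm ip g"
proof -
  have "(hnorm ip (\<lambda>x. f x + g x))^2 = Re (ip f f + ip f g + ip g f + ip g g)"
    using f g by (simp add: hnorm_sq Hadd ip_add1 ip_add2)
  also have "\<dots> = Re (ip f f) + 2 * Re (ip f g) + Re (ip g g)"
    using ip_cnj[OF f g] by simp
  also have "\<dots> \<le> Re (ip f f) + 2 * (hnorm ip f * hnorm ip g) + Re (ip g g)"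
    using CS[OF f g] complex_Re_le_cmod[of "ip f g"] by linarith
  also have "\<dots> = (hnorm ip f + hnorm ip g)^2"
    using f g by (simp add: hnorm_sq power2_eq_square algebra_simps flip: hnorm_sq)
  finally have "(hnorm ip (\<lambda>x. f x + g x))^2 \<le> (hnorm ip f + hnorm ip g)^2" .
  moreover have "0 \<le> hnorm ip f + hnorm ip g" using hnorm_ge0[OF f] hnorm_ge0[OF g] by simp
  ultimately show ?thesis by (rule power2_le_imp_le)
qed

lemma tri3: assumes "a \<in> H" "b \<in> H" "c \<in> H"
  shows "hnorm ip (\<lambda>x. a x - c x) \<le> hnorm ip (\<lambda>x. a x - b x) + hnorm ip (\<lambda>x. b x - c x)"
  using tri[of "\<lambda>x. a x - b x" "\<lambda>x. b x - c x"] assms Hdiff by simp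

end

lemma norm4: fixes A :: "'a::real_normed_vector"
  shows "norm (A - B - C + E) \<le> norm A + norm B + norm C + norm E"
proof -
  have "norm (A - B - C + E) \<le> norm (A - B - C) + norm E" by (rule norm_triangle_ineq)
  moreover have "norm (A - B - C) \<le> norm (A - B) + norm C" by (rule norm_triangle_ineq4)
  moreover have "norm (A - B) \<le> norm A + norm B" by (rule norm_triangle_ineq4)
  ultimately show ?thesis by linarith
qed

lemma hilb_deriv:
  fixes g :: "real \<Rightarrow> 'm \<Rightarrow> complex"
  assumes R: "rkhs K H ip"
    and gH: "\<And>t. g t \<in> H"
    and LL: "\<And>e. e > 0 \<Longrightarrow> \<exists>d>0. \<forall>s t. \<bar>s\<bar> < d \<and> \<bar>t\<bar> < d \<longrightarrow>
         cmod (ip (\<lambda>x. g s x - g 0 x) (\<lambda>x. g t x - g 0 x) - complex_of_real (s * t) * L) \<le> e * \<bar>s\<bar> * \<bar>t\<bar>"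
  shows "\<exists>D\<in>H. ((\<lambda>t. hnorm ip (\<lambda>x. (g t x - g 0 x) / complex_of_real t - D x)) \<longlongrightarrow> 0) (at (0::real))"
proof -
  define q where "q t = (\<lambda>x. (g t x - g 0 x) / complex_of_real t)" for t
  have qH: "q t \<in> H" for t unfolding q_def using R gH by (intro Hdivr Hdiff) auto
  have eH: "(\<lambda>x. g t x - g 0 x) \<in> H" for t using R gH by (intro Hdiff) auto
  have Rq: "ip (q s) (q t) = ip (\<lambda>x. g s x - g 0 x) (\<lambda>x. g t x - g 0 x) / complex_of_real (s * t)" for s t
  proof -
    have 1: "ip (q s) (q t) = ip (\<lambda>x. g s x - g 0 x) (q t) / complex_of_real s"
      unfolding q_def[of s] by (rule ip_divr1[OF R eH qH])
    have 2: "ip (\<lambda>x. g s x - g 0 x) (q t) = ip (\<lambda>x. g s x - g 0 x) (\<lambda>x. g t x - g 0 x) / complex_of_real t"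
      unfolding q_def[of t] by (rule ip_divr2[OF R eH eH])
    show ?thesis unfolding 1 2 by simp
  qed
  have close: "cmod (ip (q s) (q t) - L) \<le> e" if "s \<noteq> 0" "t \<noteq> 0" "cmod (ip (\<lambda>x. g s x - g 0 x) (\<lambda>x. g t x - g 0 x) - complex_of_real (s * t) * L) \<le> e * \<bar>s\<bar> * \<bar>t\<bar>" for s t e
  proof -
    have st: "complex_of_real (s * t) \<noteq> 0" using that by simp
    have "ip (q s) (q t) - L = (ip (\<lambda>x. g s x - g 0 x) (\<lambda>x. g t x - g 0 x) - complex_of_real (s * t) * L) / complex_of_real (s * t)"
      unfolding Rq using st by (simp add: field_simps)
    also have "cmod \<dots> = cmod (ip (\<lambda>x. g s x - g 0 x) (\<lambda>x. g t x - g 0 x) - complex_of_real (s * t) * L) / (\<bar>s\<bar> * \<bar>t\<bar>)"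
      by (simp add: norm_divide abs_mult norm_mult del: of_real_mult)
    also have "\<dots> \<le> e" using that by (simp add: divide_le_eq mult.assoc)
    finally show ?thesis .
  qed
  have P: "\<exists>d>0. \<forall>s t. s \<noteq> 0 \<and> t \<noteq> 0 \<and> \<bar>s\<bar> < d \<and> \<bar>t\<bar> < d \<longrightarrow> hnorm ip (\<lambda>x. q s x - q t x) < e" if e: "e > 0" for e
  proof -
    define e' where "e' = e^2 / 16"
    have e'p: "e' > 0" using e by (simp add: e'_def)
    obtain d where d: "d > 0" "\<And>s t. \<bar>s\<bar> < d \<Longrightarrow> \<bar>t\<bar> < d \<Longrightarrow>
         cmod (ip (\<lambda>x. g s x - g 0 x) (\<lambda>x. g t x - g 0 x) - complex_of_real (s * t) * L) \<le> e' * \<bar>s\<bar> * \<bar>t\<bar>"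
      using LL[OF e'p] by blast
    show ?thesis
    proof (intro exI[of _ d] conjI allI impI d(1))
      fix s t assume st: "s \<noteq> 0 \<and> t \<noteq> 0 \<and> \<bar>s\<bar> < d \<and> \<bar>t\<bar> < d"
      have c1: "cmod (ip (q a) (q b) - L) \<le> e'" if "a \<in> {s,t}" "b \<in> {s,t}" for a b
        using close[of a b e'] d(2)[of a b] st that by auto
      have "(hnorm ip (\<lambda>x. q s x - q t x))^2 = Re (ip (q s) (q s) - ip (q s) (q t) - ip (q t) (q s) + ip (q t) (q t))"
        using R qH by (simp add: hnorm_sq Hdiff ip_diff1 ip_diff2 algebra_simps)
      also have "ip (q s) (q s) - ip (q s) (q t) - ip (q t) (q s) + ip (q t) (q t)
          = (ip (q s) (q s) - L) - (ip (q s) (q t) - L) - (ip (q t) (q s) - L) + (ip (q t) (q t) - L)"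
        by simp
      also have "Re \<dots> \<le> cmod \<dots>" by (rule complex_Re_le_cmod)
      also have "\<dots> \<le> cmod (ip (q s) (q s) - L) + cmod (ip (q s) (q t) - L) + cmod (ip (q t) (q s) - L) + cmod (ip (q t) (q t) - L)"
        by (rule norm4)
      also have "\<dots> \<le> 4 * e'" using c1[of s s] c1[of s t] c1[of t s] c1[of t t] by auto
      also have "\<dots> < e^2" using e by (simp add: e'_def)
      finally have "(hnorm ip (\<lambda>x. q s x - q t x))^2 < e^2" .
      then show "hnorm ip (\<lambda>x. q s x - q t x) < e"
        by (rule power_less_imp_less_base) (use e in simp)
    qed
  qed
  define X where "X n = q (1 / real (Suc n))" for n
  have XH: "\<forall>n. X n \<in> H" using qH by (simp add: X_def)
  have Xc: "\<forall>e>0. \<exists>N. \<forall>m\<ge>N. \<forall>n\<ge>N. hnorm ip (\<lambda>x. X m x - X n x) < e"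
  proof (intro allI impI)
    fix e :: real assume e: "e > 0"
    obtain d where d: "d > 0" "\<And>s t. s \<noteq> 0 \<and> t \<noteq> 0 \<and> \<bar>s\<bar> < d \<and> \<bar>t\<bar> < d \<Longrightarrow> hnorm ip (\<lambda>x. q s x - q t x) < e"
      using P[OF e] by blast
    obtain N where N: "inverse (real (Suc N)) < d" using reals_Archimedean[OF d(1)] by blast
    have small: "1 / real (Suc n) < d" if "n \<ge> N" for n
    proof -
      have "inverse (real (Suc n)) \<le> inverse (real (Suc N))" using that by (simp add: le_imp_inverse_le)
      moreover have "1 / real (Suc n) = inverse (real (Suc n))" by (simp add: inverse_eq_divide)
      ultimately show ?thesis using N by linarith
    qed
    show "\<exists>N. \<forall>m\<ge>N. \<forall>n\<ge>N. hnorm ip (\<lambda>x. X m x - X n x) < e"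
      using small d(2) unfolding X_def by (intro exI[of _ N]) auto
  qed
  obtain D where D: "D \<in> H" "(\<lambda>n. hnorm ip (\<lambda>x. X n x - D x)) \<longlonglongrightarrow> 0"
    using complete[OF R XH Xc] by blast
  have key: "\<forall>e>0. \<exists>d>0. \<forall>t. t \<noteq> 0 \<and> dist t 0 < d \<longrightarrow> dist (hnorm ip (\<lambda>x. q t x - D x)) 0 < e"
  proof (intro allI impI)
    fix e :: real assume e: "e > 0"
    obtain d where d: "d > 0" "\<And>s t. s \<noteq> 0 \<and> t \<noteq> 0 \<and> \<bar>s\<bar> < d \<and> \<bar>t\<bar> < d \<Longrightarrow> hnorm ip (\<lambda>x. q s x - q t x) < e/2"
      using P[of "e/2"] e by auto
    obtain N1 where N1: "inverse (real (Suc N1)) < d" using reals_Archimedean[OF d(1)] by blast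
    have "\<forall>r>0. \<exists>no. \<forall>n\<ge>no. dist (hnorm ip (\<lambda>x. X n x - D x)) 0 < r"
      using D(2) unfolding lim_sequentially by blast
    then obtain N2 where N2': "\<And>n. n \<ge> N2 \<Longrightarrow> dist (hnorm ip (\<lambda>x. X n x - D x)) 0 < e/2"
      using e by (meson half_gt_zero)
    have N2: "hnorm ip (\<lambda>x. X n x - D x) < e/2" if "n \<ge> N2" for n
      using N2'[OF that] by (simp add: dist_real_def abs_less_iff)
    define n where "n = max N1 N2"
    have sn: "1 / real (Suc n) < d"
    proof -
      have "inverse (real (Suc n)) \<le> inverse (real (Suc N1))" unfolding n_def by (simp add: le_imp_inverse_le)
      moreover have "1 / real (Suc n) = inverse (real (Suc n))" by (simp add: inverse_eq_divide)
      ultimately show ?thesis using N1 by linarith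
    qed
    show "\<exists>d>0. \<forall>t. t \<noteq> 0 \<and> dist t 0 < d \<longrightarrow> dist (hnorm ip (\<lambda>x. q t x - D x)) 0 < e"
    proof (intro exI[of _ d] conjI allI impI d(1))
      fix t :: real assume t: "t \<noteq> 0 \<and> dist t 0 < d"
      have "hnorm ip (\<lambda>x. q t x - D x) \<le> hnorm ip (\<lambda>x. q t x - X n x) + hnorm ip (\<lambda>x. X n x - D x)"
        using tri3[OF R qH XH[rule_format] D(1)] by blast
      also have "\<dots> < e/2 + e/2"
        using d(2)[of t "1 / real (Suc n)"] t sn N2[of n] unfolding X_def n_def by (intro add_strict_mono) auto
      finally show "dist (hnorm ip (\<lambda>x. q t x - D x)) 0 < e"
        using hnorm_ge0[OF R, of "\<lambda>x. q t x - D x"] qH D(1) Hdiff[OF R] by simp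
    qed
  qed
  have "((\<lambda>t. hnorm ip (\<lambda>x. q t x - D x)) \<longlongrightarrow> 0) (at (0::real))"
    unfolding tendsto_iff eventually_at using key by simp
  then show ?thesis using D(1) unfolding q_def by blast
qed

lemma eps_pair:
  fixes c :: "real \<Rightarrow> 'a::metric_space"
  assumes "isCont c 0" "e > 0"
  shows "\<exists>d>0. \<forall>\<sigma> \<tau>. \<bar>\<sigma>\<bar> < d \<and> \<bar>\<tau>\<bar> < d \<longrightarrow> dist (c \<tau>, c \<sigma>) (c 0, c 0) < e"
proof -
  obtain d where d: "d > 0" "\<And>x. dist x 0 < d \<Longrightarrow> dist (c x) (c 0) < e/2"
    using assms unfolding continuous_at_eps_delta by (meson half_gt_zero)
  show ?thesis
  proof (intro exI[of _ d] conjI allI impI d(1))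
    fix \<sigma> \<tau> :: real assume st: "\<bar>\<sigma>\<bar> < d \<and> \<bar>\<tau>\<bar> < d"
    have "dist (c \<tau>, c \<sigma>) (c 0, c 0) \<le> \<bar>dist (c \<tau>) (c 0)\<bar> + \<bar>dist (c \<sigma>) (c 0)\<bar>"
      unfolding dist_Pair_Pair by (rule sqrt_sum_squares_le_sum_abs)
    also have "\<dots> < e/2 + e/2" using d(2)[of \<tau>] d(2)[of \<sigma>] st by (intro add_strict_mono) auto
    finally show "dist (c \<tau>, c \<sigma>) (c 0, c 0) < e" by simp
  qed
qed

lemma eps_one:
  fixes f :: "real \<Rightarrow> 'a::real_normed_vector"
  assumes "isCont f 0" "e > 0"
  shows "\<exists>d>0. \<forall>x. \<bar>x\<bar> < d \<longrightarrow> norm (f x - f 0) < e"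
  using assms unfolding continuous_at_eps_delta by (simp add: dist_norm)

lemma kernel_mixed:
  fixes A :: "('m::topological_space, 'e::banach) chart set"
    and K :: "'m \<Rightarrow> 'm \<Rightarrow> complex"
    and v :: "('m, 'e) chart \<Rightarrow> 'e \<Rightarrow> 'e"
    and \<phi> :: "real \<Rightarrow> 'm \<Rightarrow> 'm"
  assumes BM: "banach_manifold A"
    and SK: "smooth_kernel A K"
    and VF: "vector_field A v"
    and LF: "local_flow A v \<phi>"
  shows "\<exists>L. \<forall>e>0. \<exists>d>0. \<forall>s t. \<bar>s\<bar> < d \<and> \<bar>t\<bar> < d \<longrightarrow>
     cmod (K (\<phi> t m) (\<phi> s m) - K (\<phi> 0 m) (\<phi> s m) - K (\<phi> t m) (\<phi> 0 m) + K (\<phi> 0 m) (\<phi> 0 m)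
           - complex_of_real (s * t) * L) \<le> e * \<bar>s\<bar> * \<bar>t\<bar>"
proof -
  have "\<Union>(fst ` A) = UNIV" using BM unfolding banach_manifold_def by blast
  then have "m \<in> \<Union>(fst ` A)" by simp
  then obtain p where pA: "p \<in> A" and mp: "m \<in> fst p" by blast
  obtain U \<psi> where pe: "p = (U, \<psi>)" by (cases p)
  have Uc: "(U, \<psi>) \<in> A" and mU: "m \<in> U" using pA mp pe by auto
  have oU: "open U" using BM Uc unfolding banach_manifold_def by blast
  obtain g where hom: "homeomorphism U (\<psi> ` U) \<psi> g" using BM Uc unfolding banach_manifold_def by blast
  have gi: "\<forall>x\<in>U. g (\<psi> x) = x" using hom unfolding homeomorphism_def by blast
  have injU: "inj_on \<psi> U" by (rule inj_on_inverseI[where g=g]) (use gi in blast)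
  have inv: "\<And>x. x \<in> U \<Longrightarrow> inv_into U \<psi> (\<psi> x) = x" using injU by (simp add: inv_into_f_f)
  have phi0: "\<phi> 0 m = m" using LF unfolding local_flow_def by blast
  have "\<phi> 0 m = m \<and> (\<exists>\<epsilon>>0. continuous_on {-\<epsilon><..<\<epsilon>} (\<lambda>t. \<phi> t m) \<and>
        (\<forall>t\<in>{-\<epsilon><..<\<epsilon>}. \<forall>(U,\<psi>)\<in>A. \<phi> t m \<in> U \<longrightarrow>
           ((\<lambda>s. \<psi> (\<phi> s m)) has_vector_derivative v (U,\<psi>) (\<psi> (\<phi> t m))) (at t)))"
    using LF unfolding local_flow_def by (rule spec)
  then obtain \<epsilon> where \<epsilon>: "\<epsilon> > 0" "continuous_on {-\<epsilon><..<\<epsilon>} (\<lambda>t. \<phi> t m)"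
    "\<forall>t\<in>{-\<epsilon><..<\<epsilon>}. \<forall>(U,\<psi>)\<in>A. \<phi> t m \<in> U \<longrightarrow>
           ((\<lambda>s. \<psi> (\<phi> s m)) has_vector_derivative v (U,\<psi>) (\<psi> (\<phi> t m))) (at t)"
    by blast
  have \<epsilon>3: "((\<lambda>s. \<psi> (\<phi> s m)) has_vector_derivative v (U,\<psi>) (\<psi> (\<phi> t m))) (at t)"
    if "t \<in> {-\<epsilon><..<\<epsilon>}" "\<phi> t m \<in> U" for t
  proof -
    have "case (U,\<psi>) of (U,\<psi>) \<Rightarrow> \<phi> t m \<in> U \<longrightarrow>
           ((\<lambda>s. \<psi> (\<phi> s m)) has_vector_derivative v (U,\<psi>) (\<psi> (\<phi> t m))) (at t)"
      using bspec[OF bspec[OF \<epsilon>(3) that(1)] Uc] .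
    then show ?thesis using that(2) by simp
  qed
  have isc: "isCont (\<lambda>t. \<phi> t m) 0"
  proof -
    have "(0::real) \<in> {-\<epsilon><..<\<epsilon>}" using \<epsilon>(1) by simp
    then show ?thesis using \<epsilon>(2) continuous_on_eq_continuous_at[OF open_greaterThanLessThan] by blast
  qed
  then have "((\<lambda>t. \<phi> t m) \<longlongrightarrow> m) (at 0)" using phi0 unfolding isCont_def by simp
  then have "eventually (\<lambda>t. \<phi> t m \<in> U) (at (0::real))" using oU mU by (rule topological_tendstoD)
  then obtain d1 where d1: "d1 > 0" "\<And>t. t \<noteq> 0 \<Longrightarrow> dist t 0 < d1 \<Longrightarrow> \<phi> t m \<in> U"
    unfolding eventually_at by auto
  define \<delta> where "\<delta> = min \<epsilon> d1"
  have dpos: "\<delta> > 0" using \<epsilon> d1 by (simp add: \<delta>_def)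
  have inU: "\<phi> t m \<in> U" if "\<bar>t\<bar> < \<delta>" for t
    using d1(2)[of t] that mU phi0 by (cases "t = 0") (auto simp: \<delta>_def)
  define V where "V = v (U, \<psi>)"
  define c where "c t = \<psi> (\<phi> t m)" for t
  have dc: "(c has_vector_derivative V (c t)) (at t)" if "\<bar>t\<bar> < \<delta>" for t
  proof -
    have "t \<in> {-\<epsilon><..<\<epsilon>}" using that by (auto simp: \<delta>_def)
    from \<epsilon>3[OF this inU[OF that]] show ?thesis unfolding c_def V_def .
  qed
  have cU: "c t \<in> \<psi> ` U" if "\<bar>t\<bar> < \<delta>" for t using inU[OF that] unfolding c_def by blast
  define W where "W = \<psi> ` U \<times> \<psi> ` U"
  define kap where "kap = (\<lambda>(x,y). K (inv_into U \<psi> x) (inv_into U \<psi> y))"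
  have skap: "smooth_on W kap"
  proof -
    have "\<forall>(U,\<psi>)\<in>A. \<forall>(V,\<rho>)\<in>A.
      smooth_on (\<psi> ` U \<times> \<rho> ` V) (\<lambda>(x,y). K (inv_into U \<psi> x) (inv_into V \<rho> y))"
      using SK unfolding smooth_kernel_def .
    then have "case (U,\<psi>) of (U,\<psi>) \<Rightarrow> (case (U,\<psi>) of (V,\<rho>) \<Rightarrow>
      smooth_on (\<psi> ` U \<times> \<rho> ` V) (\<lambda>(x,y). K (inv_into U \<psi> x) (inv_into V \<rho> y)))"
      using Uc by (metis (no_types, lifting) case_prodD case_prodI2)
    then show ?thesis unfolding W_def kap_def by simp
  qed
  have sV: "smooth_on (\<psi> ` U) V"
  proof -
    have "\<forall>(U,\<psi>)\<in>A. smooth_on (\<psi> ` U) (v (U,\<psi>))"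
      using VF unfolding vector_field_def by (rule conjunct1)
    then have "case (U,\<psi>) of (U,\<psi>) \<Rightarrow> smooth_on (\<psi> ` U) (v (U,\<psi>))" using Uc by (rule bspec)
    then show ?thesis unfolding V_def by simp
  qed
  obtain F :: "nat \<Rightarrow> 'e \<times> 'e \<Rightarrow> ('e \<times> 'e) list \<Rightarrow> complex" where
    Fo: "open W" and
    F1: "\<And>x. x\<in>W \<Longrightarrow> (kap has_derivative (\<lambda>h. F 1 x [h])) (at x)" and
    F2: "\<And>x w. x\<in>W \<Longrightarrow> ((\<lambda>y. F 1 y [w]) has_derivative (\<lambda>h. F 2 x [h,w])) (at x)" and
    Fl1: "\<And>x b. x\<in>W \<Longrightarrow> linear (\<lambda>h. F 2 x [h,b])" and
    Fl2: "\<And>x a. x\<in>W \<Longrightarrow> linear (\<lambda>h. F 2 x [a,h])" and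
    FC: "\<And>x. x\<in>W \<Longrightarrow> \<exists>C\<ge>0. \<forall>a b. norm (F 2 x [a,b]) \<le> C * norm a * norm b" and
    Fc: "\<And>x e. x\<in>W \<Longrightarrow> e > 0 \<Longrightarrow> \<exists>d>0. \<forall>y\<in>W. dist y x < d \<longrightarrow>
        (\<forall>a b. norm (F 2 y [a,b] - F 2 x [a,b]) \<le> e * norm a * norm b)"
    using smooth_facts[OF skap] by blast
  obtain FV :: "nat \<Rightarrow> 'e \<Rightarrow> 'e list \<Rightarrow> 'e" where
    FVo: "open (\<psi> ` U)" and
    FV1: "\<And>x. x\<in>\<psi> ` U \<Longrightarrow> (V has_derivative (\<lambda>h. FV 1 x [h])) (at x)" and
    FV2: "\<And>x w. x\<in>\<psi> ` U \<Longrightarrow> ((\<lambda>y. FV 1 y [w]) has_derivative (\<lambda>h. FV 2 x [h,w])) (at x)" and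
    FVl1: "\<And>x b. x\<in>\<psi> ` U \<Longrightarrow> linear (\<lambda>h. FV 2 x [h,b])" and
    FVl2: "\<And>x a. x\<in>\<psi> ` U \<Longrightarrow> linear (\<lambda>h. FV 2 x [a,h])" and
    FVC: "\<And>x. x\<in>\<psi> ` U \<Longrightarrow> \<exists>C\<ge>0. \<forall>a b. norm (FV 2 x [a,b]) \<le> C * norm a * norm b" and
    FVc: "\<And>x e. x\<in>\<psi> ` U \<Longrightarrow> e > 0 \<Longrightarrow> \<exists>d>0. \<forall>y\<in>\<psi> ` U. dist y x < d \<longrightarrow>
        (\<forall>a b. norm (FV 2 y [a,b] - FV 2 x [a,b]) \<le> e * norm a * norm b)"
    using smooth_facts[OF sV] by blast
  have pW: "(c \<tau>, c \<sigma>) \<in> W" if "\<bar>\<sigma>\<bar> < \<delta>" "\<bar>\<tau>\<bar> < \<delta>" for \<sigma> \<tau>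
    using cU that unfolding W_def by blast
  define G where "G \<sigma> \<tau> = F 1 (c \<tau>, c \<sigma>) [(0, V (c \<sigma>))]" for \<sigma> \<tau>
  define M where "M \<sigma> \<tau> = F 2 (c \<tau>, c \<sigma>) [(V (c \<tau>), 0), (0, V (c \<sigma>))]" for \<sigma> \<tau>
  define k where "k \<sigma> \<tau> = kap (c \<tau>, c \<sigma>)" for \<sigma> \<tau>
  have dG: "((\<lambda>\<sigma>. k \<sigma> \<tau>) has_vector_derivative G \<sigma> \<tau>) (at \<sigma>)" if "\<bar>\<sigma>\<bar> < \<delta>" "\<bar>\<tau>\<bar> < \<delta>" for \<sigma> \<tau>
  proof -
    have p: "((\<lambda>\<sigma>. (c \<tau>, c \<sigma>)) has_vector_derivative (0, V (c \<sigma>))) (at \<sigma>)"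
      by (rule has_vector_derivative_Pair[OF has_vector_derivative_const dc[OF that(1)]])
    have "((kap \<circ> (\<lambda>\<sigma>. (c \<tau>, c \<sigma>))) has_vector_derivative (\<lambda>h. F 1 (c \<tau>, c \<sigma>) [h]) (0, V (c \<sigma>))) (at \<sigma> within UNIV)"
      by (rule vector_derivative_diff_chain_within[OF p has_derivative_at_withinI[OF F1[OF pW[OF that]]]])
    then show ?thesis unfolding k_def G_def o_def by simp
  qed
  have dM: "((\<lambda>\<tau>. G \<sigma> \<tau>) has_vector_derivative M \<sigma> \<tau>) (at \<tau>)" if "\<bar>\<sigma>\<bar> < \<delta>" "\<bar>\<tau>\<bar> < \<delta>" for \<sigma> \<tau>
  proof -
    have p: "((\<lambda>\<tau>. (c \<tau>, c \<sigma>)) has_vector_derivative (V (c \<tau>), 0)) (at \<tau>)"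
      by (rule has_vector_derivative_Pair[OF dc[OF that(2)] has_vector_derivative_const])
    have "(((\<lambda>y. F 1 y [(0, V (c \<sigma>))]) \<circ> (\<lambda>\<tau>. (c \<tau>, c \<sigma>))) has_vector_derivative
           (\<lambda>h. F 2 (c \<tau>, c \<sigma>) [h, (0, V (c \<sigma>))]) (V (c \<tau>), 0)) (at \<tau> within UNIV)"
      by (rule vector_derivative_diff_chain_within[OF p has_derivative_at_withinI[OF F2[OF pW[OF that]]]])
    then show ?thesis unfolding M_def G_def o_def by simp
  qed
  have d0: "\<bar>0::real\<bar> < \<delta>" using dpos by simp
  have p0W: "(c 0, c 0) \<in> W" using pW[OF d0 d0] .
  have cc: "isCont c 0" using has_vector_derivative_continuous[OF dc[OF d0]] by simp
  have Vc: "isCont (\<lambda>x. V (c x)) 0"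
  proof -
    have "isCont V (c 0)" using has_derivative_continuous[OF FV1[OF cU[OF d0]]] by simp
    then show ?thesis using cc by (simp add: continuous_at_compose[unfolded o_def] isCont_o2)
  qed
  obtain C where C: "C \<ge> 0" "\<And>a b. norm (F 2 (c 0, c 0) [a,b]) \<le> C * norm a * norm b" using FC[OF p0W] by blast
  have cM: "\<exists>d>0. \<forall>\<sigma> \<tau>. \<bar>\<sigma>\<bar> < d \<and> \<bar>\<tau>\<bar> < d \<longrightarrow> norm (M \<sigma> \<tau> - M 0 0) \<le> e" if e: "e > 0" for e
  proof -
    have "\<exists>d>0. \<forall>\<sigma> \<tau>. \<bar>\<sigma>\<bar><d \<and> \<bar>\<tau>\<bar><d \<longrightarrow>
           norm (F 2 ((\<lambda>\<sigma> \<tau>. (c \<tau>, c \<sigma>)) \<sigma> \<tau>) [(\<lambda>\<sigma> \<tau>. (V (c \<tau>), 0)) \<sigma> \<tau>, (\<lambda>\<sigma> \<tau>. (0, V (c \<sigma>))) \<sigma> \<tau>]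
               - F 2 ((\<lambda>\<sigma> \<tau>. (c \<tau>, c \<sigma>)) 0 0) [(\<lambda>\<sigma> \<tau>. (V (c \<tau>), 0)) 0 0, (\<lambda>\<sigma> \<tau>. (0, V (c \<sigma>))) 0 0]) \<le> e"
    proof (rule cont_M[where W=W and \<delta>=\<delta> and C=C])
      show "\<exists>d>0. \<forall>\<sigma> \<tau>. \<bar>\<sigma>\<bar><d \<and> \<bar>\<tau>\<bar><d \<longrightarrow> dist (c \<tau>, c \<sigma>) (c 0, c 0) < e" if "e > 0" for e
        using eps_pair[OF cc that] by simp
      show "\<exists>d>0. \<forall>\<sigma> \<tau>. \<bar>\<sigma>\<bar><d \<and> \<bar>\<tau>\<bar><d \<longrightarrow> norm ((V (c \<tau>), 0::'e) - (V (c 0), 0)) < e" if "e > 0" for e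
        using eps_one[OF Vc that] by (auto simp: norm_Pair)
      show "\<exists>d>0. \<forall>\<sigma> \<tau>. \<bar>\<sigma>\<bar><d \<and> \<bar>\<tau>\<bar><d \<longrightarrow> norm ((0::'e, V (c \<sigma>)) - (0, V (c 0))) < e" if "e > 0" for e
        using eps_one[OF Vc that] by (auto simp: norm_Pair)
      show "\<exists>d>0. \<forall>p\<in>W. dist p (c 0, c 0) < d \<longrightarrow>
              (\<forall>a b. norm (F 2 p [a,b] - F 2 (c 0, c 0) [a,b]) \<le> e * norm a * norm b)" if "e > 0" for e
        using Fc[OF p0W that] by simp
        next
      show "\<delta> > 0" by (rule dpos)
    next
      fix \<sigma> \<tau> :: real assume "\<bar>\<sigma>\<bar> < \<delta>" "\<bar>\<tau>\<bar> < \<delta>"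
      then show "(c \<tau>, c \<sigma>) \<in> W" by (rule pW)
    next
      fix b show "linear (\<lambda>h. F 2 (c 0, c 0) [h, b])" by (rule Fl1[OF p0W])
    next
      fix a show "linear (\<lambda>h. F 2 (c 0, c 0) [a, h])" by (rule Fl2[OF p0W])
    next
      show "C \<ge> 0" by (rule C(1))
    next
      fix a b show "norm (F 2 (c 0, c 0) [a, b]) \<le> C * norm a * norm b" by (rule C(2))
    next
      show "e > 0" by (rule e)
    qed
    then show ?thesis unfolding M_def by simp
  qed
  have mx: "\<exists>d>0. \<forall>s t. \<bar>s\<bar> < d \<and> \<bar>t\<bar> < d \<longrightarrow>
           norm (k s t - k s 0 - k 0 t + k 0 0 - (s * t) *\<^sub>R M 0 0) \<le> e * \<bar>s\<bar> * \<bar>t\<bar>" if e: "e > 0" for e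
    by (rule mixed[OF dpos dG dM cM e])
  have keq: "k \<sigma> \<tau> = K (\<phi> \<tau> m) (\<phi> \<sigma> m)" if "\<bar>\<sigma>\<bar> < \<delta>" "\<bar>\<tau>\<bar> < \<delta>" for \<sigma> \<tau>
    unfolding k_def kap_def c_def using inv[OF inU[OF that(1)]] inv[OF inU[OF that(2)]] by simp
  show ?thesis
  proof (intro exI[of _ "M 0 0"] allI impI)
    fix e :: real assume e: "e > 0"
    obtain d where d: "d > 0" "\<And>s t. \<bar>s\<bar> < d \<Longrightarrow> \<bar>t\<bar> < d \<Longrightarrow>
           norm (k s t - k s 0 - k 0 t + k 0 0 - (s * t) *\<^sub>R M 0 0) \<le> e * \<bar>s\<bar> * \<bar>t\<bar>"
      using mx[OF e] by blast
    show "\<exists>d>0. \<forall>s t. \<bar>s\<bar> < d \<and> \<bar>t\<bar> < d \<longrightarrow>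
     cmod (K (\<phi> t m) (\<phi> s m) - K (\<phi> 0 m) (\<phi> s m) - K (\<phi> t m) (\<phi> 0 m) + K (\<phi> 0 m) (\<phi> 0 m)
           - complex_of_real (s * t) * M 0 0) \<le> e * \<bar>s\<bar> * \<bar>t\<bar>"
    proof (intro exI[of _ "min d \<delta>"] conjI allI impI)
      show "min d \<delta> > 0" using d dpos by simp
      fix s t :: real assume st: "\<bar>s\<bar> < min d \<delta> \<and> \<bar>t\<bar> < min d \<delta>"
      then have s1: "\<bar>s\<bar> < \<delta>" "\<bar>t\<bar> < \<delta>" "\<bar>s\<bar> < d" "\<bar>t\<bar> < d" by auto
      show "cmod (K (\<phi> t m) (\<phi> s m) - K (\<phi> 0 m) (\<phi> s m) - K (\<phi> t m) (\<phi> 0 m) + K (\<phi> 0 m) (\<phi> 0 m)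
           - complex_of_real (s * t) * M 0 0) \<le> e * \<bar>s\<bar> * \<bar>t\<bar>"
        using d(2)[OF s1(3,4)] keq[OF s1(1) s1(2)] keq[OF s1(1) d0] keq[OF d0 s1(2)] keq[OF d0 d0]
        by (simp add: scaleR_conv_of_real)
    qed
  qed
qed

lemma vd_from_quot:
  fixes F :: "real \<Rightarrow> complex"
  assumes T: "((\<lambda>t. (F t - F 0) / complex_of_real t) \<longlongrightarrow> c) (at 0)"
  shows "(F has_vector_derivative c) (at 0)"
  unfolding has_vector_derivative_def
proof (rule deriv_from_quot)
  show "bounded_linear (\<lambda>h. h *\<^sub>R c)" by (rule bounded_linear_scaleR_left)
  have T0: "((\<lambda>t. cmod ((F t - F 0) / complex_of_real t - c)) \<longlongrightarrow> 0) (at 0)"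
    using T by (simp add: tendsto_norm_zero_iff LIM_zero_iff)
  show "((\<lambda>y. norm (F y - F 0 - (y - 0) *\<^sub>R c) / norm (y - 0)) \<longlongrightarrow> 0) (at 0)"
  proof (rule Lim_transform_eventually[OF T0])
    show "\<forall>\<^sub>F t in at 0. cmod ((F t - F 0) / complex_of_real t - c) = norm (F t - F 0 - (t - 0) *\<^sub>R c) / norm (t - 0)"
    proof -
      have ev: "\<forall>\<^sub>F t in at (0::real). t \<noteq> 0" by (simp add: eventually_at_filter)
      then show ?thesis
      proof eventually_elim
        case (elim t)
        then have tz: "complex_of_real t \<noteq> 0" by simp
        have "(F t - F 0) / complex_of_real t - c = (F t - F 0 - complex_of_real t * c) / complex_of_real t"
          using tz by (simp add: field_simps)
        then show ?case by (simp add: norm_divide scaleR_conv_of_real)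
      qed
    qed
  qed
qed

context
  fixes K :: "'m \<Rightarrow> 'm \<Rightarrow> complex" and H and ip
  assumes R: "rkhs K H ip"
begin

lemma Hsum: "(\<And>j. u j \<in> H) \<Longrightarrow> (\<lambda>x. \<Sum>j<(n::nat). d j * u j x) \<in> H"
proof (induction n)
  case 0 then show ?case using H0[OF R] by simp
next
  case (Suc n)
  then show ?case using Hadd[OF R Suc.IH Hscale[OF R Suc.prems[of n], of "d n"]] by simp
qed

lemma ip_sum1: "(\<And>j. u j \<in> H) \<Longrightarrow> h \<in> H \<Longrightarrow> ip (\<lambda>x. \<Sum>j<(n::nat). d j * u j x) h = (\<Sum>j<(n::nat). d j * ip (u j) h)"
proof (induction n)
  case 0
  have "ip (\<lambda>x. 0 * h x) h = 0 * ip h h" by (rule ip_scale1[OF R 0(2) 0(2)])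
  then show ?case by simp
next
  case (Suc n)
  have "ip (\<lambda>x. (\<Sum>j<(n::nat). d j * u j x) + d n * u n x) h = ip (\<lambda>x. \<Sum>j<(n::nat). d j * u j x) h + ip (\<lambda>x. d n * u n x) h"
    by (rule ip_add1[OF R Hsum Hscale[OF R] Suc.prems(2)]) (use Suc.prems in auto)
  then show ?case using Suc ip_scale1[OF R Suc.prems(1) Suc.prems(2), of "d n"] by simp
qed

lemma ip_sum2: "(\<And>j. u j \<in> H) \<Longrightarrow> h \<in> H \<Longrightarrow> ip h (\<lambda>x. \<Sum>j<(n::nat). d j * u j x) = (\<Sum>j<(n::nat). cnj (d j) * ip h (u j))"
proof -
  assume u: "\<And>j. u j \<in> H" and h: "h \<in> H"
  have "ip h (\<lambda>x. \<Sum>j<(n::nat). d j * u j x) = cnj (ip (\<lambda>x. \<Sum>j<(n::nat). d j * u j x) h)"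
    by (rule ip_cnj[OF R Hsum[OF u] h])
  also have "\<dots> = (\<Sum>j<(n::nat). cnj (d j) * cnj (ip (u j) h))" using ip_sum1[OF u h] by simp
  also have "\<dots> = (\<Sum>j<(n::nat). cnj (d j) * ip h (u j))" using ip_cnj[OF R u h] by simp
  finally show ?thesis .
qed

lemma deriv_pair:
  assumes f: "f \<in> H" and D: "D \<in> H"
    and HD: "H_has_derivative_at0 ip (\<lambda>t x. K x (\<phi> t m)) D"
  shows "((\<lambda>t. f (\<phi> t m)) has_vector_derivative ip f D) (at 0)"
proof (rule vd_from_quot)
  define q where "q t = (\<lambda>x. (K x (\<phi> t m) - K x (\<phi> 0 m)) / complex_of_real t)" for t
  have qH: "q t \<in> H" for t unfolding q_def by (intro Hdivr[OF R] Hdiff[OF R] HK[OF R])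
  have eq: "(f (\<phi> t m) - f (\<phi> 0 m)) / complex_of_real t = ip f (q t)" for t
  proof -
    have "ip f (q t) = ip f (\<lambda>x. K x (\<phi> t m) - K x (\<phi> 0 m)) / complex_of_real t"
      unfolding q_def by (rule ip_divr2[OF R Hdiff[OF R HK[OF R] HK[OF R]] f])
    also have "ip f (\<lambda>x. K x (\<phi> t m) - K x (\<phi> 0 m)) = f (\<phi> t m) - f (\<phi> 0 m)"
      using ip_diff2[OF R HK[OF R] HK[OF R] f] repr[OF R f] by simp
    finally show ?thesis by simp
  qed
  have T: "((\<lambda>t. hnorm ip f * hnorm ip (\<lambda>x. q t x - D x)) \<longlongrightarrow> 0) (at 0)"
    using HD unfolding H_has_derivative_at0_def q_def by (intro tendsto_mult_right_zero) simp
  have "((\<lambda>t. ip f (q t) - ip f D) \<longlongrightarrow> 0) (at 0)"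
  proof (rule Lim_null_comparison[OF _ T])
    show "\<forall>\<^sub>F t in at 0. norm (ip f (q t) - ip f D) \<le> hnorm ip f * hnorm ip (\<lambda>x. q t x - D x)"
    proof (rule always_eventually, rule allI)
      fix t
      have "ip f (q t) - ip f D = ip f (\<lambda>x. q t x - D x)" using ip_diff2[OF R qH D f] by simp
      then show "norm (ip f (q t) - ip f D) \<le> hnorm ip f * hnorm ip (\<lambda>x. q t x - D x)"
        using CS[OF R f Hdiff[OF R qH D]] by simp
    qed
  qed
  then have "((\<lambda>t. ip f (q t)) \<longlongrightarrow> ip f D) (at 0)" by (simp add: LIM_zero_iff)
  then show "((\<lambda>t. (f (\<phi> t m) - f (\<phi> 0 m)) / complex_of_real t) \<longlongrightarrow> ip f D) (at 0)"
    unfolding eq .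
qed

end

theorem proposition2p2:
  fixes A :: "('m::topological_space, 'e::banach) chart set"
    and K :: "'m \<Rightarrow> 'm \<Rightarrow> complex"
    and H :: "('m \<Rightarrow> complex) set"
    and ip :: "('m \<Rightarrow> complex) \<Rightarrow> ('m \<Rightarrow> complex) \<Rightarrow> complex"
    and v :: "('m, 'e) chart \<Rightarrow> 'e \<Rightarrow> 'e"
    and \<phi> :: "real \<Rightarrow> 'm \<Rightarrow> 'm"
  assumes "banach_manifold A"
    and "smooth_kernel A K"
    and "pos_def_kernel K"
    and "rkhs K H ip"
    and "\<forall>f\<in>H. smooth_fun A f"
    and "vector_field A v"
    and "local_flow A v \<phi>"
    and "K_symmetric \<phi> K"
  shows "(\<forall>m. lie \<phi> (\<lambda>x. K x m) \<in> H \<and>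
              H_has_derivative_at0 ip (\<lambda>t x. K x (\<phi> t m)) (lie \<phi> (\<lambda>x. K x m)))
       \<and> kspan K \<subseteq> lie_domain H \<phi>
       \<and> (\<forall>f\<in>kspan K. \<forall>g\<in>kspan K. ip (lie \<phi> f) g = ip f (lie \<phi> g))
       \<and> (\<forall>f\<in>H. \<forall>m. ip f (lie \<phi> (\<lambda>x. K x m)) = lie \<phi> f m)"
proof -
  note BM = assms(1) and SK = assms(2) and R = assms(4) and VF = assms(6) and LF = assms(7) and KS = assms(8)
  have ex: "\<exists>D\<in>H. H_has_derivative_at0 ip (\<lambda>t x. K x (\<phi> t m)) D" for m
  proof -
    define g where "g t = (\<lambda>x. K x (\<phi> t m))" for t
    have gH: "g t \<in> H" for t unfolding g_def by (rule HK[OF R])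
    obtain L where L: "\<And>e. e > 0 \<Longrightarrow> \<exists>d>0. \<forall>s t. \<bar>s\<bar> < d \<and> \<bar>t\<bar> < d \<longrightarrow>
     cmod (K (\<phi> t m) (\<phi> s m) - K (\<phi> 0 m) (\<phi> s m) - K (\<phi> t m) (\<phi> 0 m) + K (\<phi> 0 m) (\<phi> 0 m)
           - complex_of_real (s * t) * L) \<le> e * \<bar>s\<bar> * \<bar>t\<bar>"
      using kernel_mixed[OF BM SK VF LF, of m] by blast
    have ipe: "ip (\<lambda>x. g s x - g 0 x) (\<lambda>x. g t x - g 0 x) =
        K (\<phi> t m) (\<phi> s m) - K (\<phi> 0 m) (\<phi> s m) - K (\<phi> t m) (\<phi> 0 m) + K (\<phi> 0 m) (\<phi> 0 m)" for s t
    proof -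
      have eH: "(\<lambda>x. g s x - g 0 x) \<in> H" by (rule Hdiff[OF R gH gH])
      have "ip (\<lambda>x. g s x - g 0 x) (\<lambda>x. g t x - g 0 x) = ip (\<lambda>x. g s x - g 0 x) (g t) - ip (\<lambda>x. g s x - g 0 x) (g 0)"
        by (rule ip_diff2[OF R gH gH eH])
      also have "\<dots> = (g s (\<phi> t m) - g 0 (\<phi> t m)) - (g s (\<phi> 0 m) - g 0 (\<phi> 0 m))"
        using repr[OF R eH, of "\<phi> t m"] repr[OF R eH, of "\<phi> 0 m"] unfolding g_def by simp
      finally show ?thesis unfolding g_def by simp
    qed
    have "\<exists>D\<in>H. ((\<lambda>t. hnorm ip (\<lambda>x. (g t x - g 0 x) / complex_of_real t - D x)) \<longlongrightarrow> 0) (at (0::real))"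
      by (rule hilb_deriv[OF R gH]) (use L in \<open>simp only: ipe\<close>)
    then show ?thesis unfolding H_has_derivative_at0_def g_def .
  qed
  define D where "D m = (SOME D. D \<in> H \<and> H_has_derivative_at0 ip (\<lambda>t x. K x (\<phi> t m)) D)" for m
  have DH: "D m \<in> H" and DD: "H_has_derivative_at0 ip (\<lambda>t x. K x (\<phi> t m)) (D m)" for m
    using someI_ex[OF ex[of m, unfolded Bex_def]] unfolding D_def by auto
  have lieF: "lie \<phi> f m = ip f (D m)" if f: "f \<in> H" for f m
    unfolding lie_def using vector_derivative_at[OF deriv_pair[where \<phi>=\<phi> and m=m and D="D m", OF R f DH[of m] DD[of m]]] by simp
  have DE: "D m = lie \<phi> (\<lambda>x. K x m)" for m
  proof
    fix n
    have "D m n = ip (D m) (\<lambda>x. K x n)" using repr[OF R DH] by simp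
    also have "\<dots> = cnj (ip (\<lambda>x. K x n) (D m))" by (rule ip_cnj[OF R HK[OF R] DH])
    also have "ip (\<lambda>x. K x n) (D m) = lie \<phi> (\<lambda>x. K x n) m" using lieF[OF HK[OF R]] by simp
    also have "cnj (lie \<phi> (\<lambda>x. K x n) m) = lie \<phi> (\<lambda>x. K x m) n" 
    proof -
      have "\<forall>m n. lie \<phi> (\<lambda>x. K x m) n = cnj (lie \<phi> (\<lambda>x. K x n) m)" using KS unfolding K_symmetric_def .
      then have "lie \<phi> (\<lambda>x. K x m) n = cnj (lie \<phi> (\<lambda>x. K x n) m)" by blast
      then show ?thesis by (rule sym)
    qed
    finally show "D m n = lie \<phi> (\<lambda>x. K x m) n" .
  qed
  have P1: "\<forall>m. lie \<phi> (\<lambda>x. K x m) \<in> H \<and> H_has_derivative_at0 ip (\<lambda>t x. K x (\<phi> t m)) (lie \<phi> (\<lambda>x. K x m))"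
    using DH DD unfolding DE by blast
  have P4: "\<forall>f\<in>H. \<forall>m. ip f (lie \<phi> (\<lambda>x. K x m)) = lie \<phi> f m"
    using lieF unfolding DE by simp
  have LH: "lie \<phi> (\<lambda>x. K x m) \<in> H" for m using P1 by blast
  have kspanE: "f \<in> H \<and> lie \<phi> f = (\<lambda>y. \<Sum>j<n. c j * lie \<phi> (\<lambda>x. K x (ms j)) y)"
    if f: "f = (\<lambda>x. \<Sum>j<(n::nat). c j * K x (ms j))" for f n c ms
  proof
    show "f \<in> H" unfolding f by (rule Hsum[OF R HK[OF R]])
    show "lie \<phi> f = (\<lambda>y. \<Sum>j<n. c j * lie \<phi> (\<lambda>x. K x (ms j)) y)"
    proof
      fix y
      have "((\<lambda>t. \<Sum>j<n. c j * K (\<phi> t y) (ms j)) has_vector_derivative (\<Sum>j<n. c j * lie \<phi> (\<lambda>x. K x (ms j)) y)) (at 0)"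
      proof (rule has_vector_derivative_sum)
        fix j
        have "((\<lambda>t. K (\<phi> t y) (ms j)) has_vector_derivative ip (\<lambda>x. K x (ms j)) (D y)) (at 0)"
          by (rule deriv_pair[where \<phi>=\<phi> and m=y and D="D y", OF R HK[OF R] DH[of y] DD[of y]])
        then show "((\<lambda>t. c j * K (\<phi> t y) (ms j)) has_vector_derivative c j * lie \<phi> (\<lambda>x. K x (ms j)) y) (at 0)"
          using lieF[OF HK[OF R], of "ms j" y] by (simp add: has_vector_derivative_mult_right)
      qed
      then show "lie \<phi> f y = (\<Sum>j<n. c j * lie \<phi> (\<lambda>x. K x (ms j)) y)"
        unfolding f lie_def by (rule vector_derivative_at)
    qed
  qed
  have P2: "kspan K \<subseteq> lie_domain H \<phi>"
  proof
    fix f assume "f \<in> kspan K"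
    then obtain n c ms where f: "f = (\<lambda>x. \<Sum>j<(n::nat). c j * K x (ms j))" unfolding kspan_def by blast
    have "lie \<phi> f \<in> H" using kspanE[OF f] Hsum[OF R LH] by simp
    then show "f \<in> lie_domain H \<phi>" using kspanE[OF f] unfolding lie_domain_def by blast
  qed
  have P3: "\<forall>f\<in>kspan K. \<forall>g\<in>kspan K. ip (lie \<phi> f) g = ip f (lie \<phi> g)"
  proof (intro ballI)
    fix f g assume fk: "f \<in> kspan K" and gk: "g \<in> kspan K"
    have fH: "f \<in> H" and lfH: "lie \<phi> f \<in> H" using P2 fk unfolding lie_domain_def by auto
    obtain n d ns where g: "g = (\<lambda>x. \<Sum>j<(n::nat). d j * K x (ns j))" using gk unfolding kspan_def by blast
    have "ip (lie \<phi> f) g = (\<Sum>j<n. cnj (d j) * ip (lie \<phi> f) (\<lambda>x. K x (ns j)))"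
      unfolding g by (rule ip_sum2[OF R HK[OF R] lfH])
    also have "\<dots> = (\<Sum>j<n. cnj (d j) * lie \<phi> f (ns j))" using repr[OF R lfH] by simp
    also have "\<dots> = (\<Sum>j<n. cnj (d j) * ip f (lie \<phi> (\<lambda>x. K x (ns j))))" using P4 fH by simp
    also have "\<dots> = ip f (\<lambda>y. \<Sum>j<n. d j * lie \<phi> (\<lambda>x. K x (ns j)) y)"
      by (rule ip_sum2[OF R LH fH, symmetric])
    also have "\<dots> = ip f (lie \<phi> g)" using kspanE[OF g] by simp
    finally show "ip (lie \<phi> f) g = ip f (lie \<phi> g)" .
  qed
  show ?thesis using P1 P2 P3 P4 by blast
qed

end
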